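(* Let $Q$ be a probability measure on $\mathcal{X}$, $f_0\in L_2(Q)$, $\sigma>0$, and let $f_1,\ldots,f_M$ satisfy (A3): $\sup_j\sup_{x}|f_j(x)|\le\kappa<\infty$. Suppose $f^\ast=\sum_{j=1}^M\lambda^\ast_jf_j$ with $\lambda^\ast\in\Lambda$ satisfies $E_Q[(f-f^\ast)(f^\ast-f_0)]=0$ for every $f\in\mathcal{F}^{\Lambda}$. Then there exist $C>0$ and, for every $n$ and every $\lambda_2\in\Lambda$, a measurable function $\phi_n$ of $(X^n,Y^n)$ with values in $[0,1]$ such that $$P^{(n)}_{0,Q}\phi_n\le\exp\{-Cn\,d_\Sigma^2(\lambda_2,\lambda^\ast)\},\qquad \sup_{\lambda\in\Lambda:\ d_\Sigma(\lambda,\lambda_2)<\frac14 d_\Sigma(\lambda^\ast,\lambda_2)}P^{(n)}_{\lambda,Q}(1-\phi_n)\le\exp\{-Cn\,d_\Sigma^2(\lambda_2,\lambda^\ast)\}.$$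
   Context: $\Lambda=\{\lambda\in\mathbb{R}^M:\lambda_j\ge0,\sum_j\lambda_j=1\}$, $\mathcal{F}^{\Lambda}=\{\sum_j\lambda_jf_j:\lambda\in\Lambda\}$. $\Sigma=(E_Q[f_i(X)f_j(X)])_{i,j}$ with $X\sim Q$ and $d_\Sigma(\lambda,\lambda')=\|\Sigma^{1/2}(\lambda-\lambda')\|_2=\|\sum_j(\lambda_j-\lambda'_j)f_j\|_{L_2(Q)}$. $P_{\lambda,Q}$ is the law of $(X,Y)$ with $X\sim Q$ and $Y\mid X\sim N(\sum_j\lambda_jf_j(X),\sigma^2)$; $P_{0,Q}$ is the law with $X\sim Q$, $Y\mid X\sim N(f_0(X),\sigma^2)$; superscript $(n)$ denotes the $n$-fold product, and $(X^n,Y^n)$ are $n$ i.i.d. copies of $(X,Y)$. *)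

theory Defs
  imports "HOL-Probability.Probability"
begin

definition Lsimplex :: "nat \<Rightarrow> (nat \<Rightarrow> real) set" where
  "Lsimplex M = {l. (\<forall>j<M. 0 \<le> l j) \<and> (\<Sum>j<M. l j) = 1}"

definition comb :: "nat \<Rightarrow> (nat \<Rightarrow> 'a \<Rightarrow> real) \<Rightarrow> (nat \<Rightarrow> real) \<Rightarrow> 'a \<Rightarrow> real" where
  "comb M f l x = (\<Sum>j<M. l j * f j x)"

definition dSigma :: "'a measure \<Rightarrow> nat \<Rightarrow> (nat \<Rightarrow> 'a \<Rightarrow> real) \<Rightarrow> (nat \<Rightarrow> real) \<Rightarrow> (nat \<Rightarrow> real) \<Rightarrow> real" where
  "dSigma Q M f l l' = sqrt (\<integral>x. (\<Sum>j<M. (l j - l' j) * f j x)\<^sup>2 \<partial>Q)"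

(* law of (X,Y): X ~ Q, Y | X ~ N(g(X), sigma^2) *)
definition regr_law :: "'a measure \<Rightarrow> ('a \<Rightarrow> real) \<Rightarrow> real \<Rightarrow> ('a \<times> real) measure" where
  "regr_law Q g \<sigma> = density (Q \<Otimes>\<^sub>M lborel) (\<lambda>(x, y). ennreal (normal_density (g x) \<sigma> y))"

definition nfold :: "nat \<Rightarrow> 'b measure \<Rightarrow> (nat \<Rightarrow> 'b) measure" where
  "nfold n P = PiM {..<n} (\<lambda>_. P)"

end

theory Submission
  imports Defs
begin


lemma coord_indep:
  assumes P: "prob_space P"
  shows "prob_space.indep_vars (PiM I (\<lambda>_. P)) (\<lambda>_. P) (\<lambda>i z. z i) I"
proof (cases "I = {}")
  case True
  interpret N: prob_space "PiM I (\<lambda>_. P)" using P by (intro prob_space_PiM) auto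
  show ?thesis using True unfolding N.indep_vars_def N.indep_sets_def by auto
next
  case False
  interpret N: prob_space "PiM I (\<lambda>_. P)" using P by (intro prob_space_PiM) auto
  show ?thesis
  proof (subst N.indep_vars_iff_distr_eq_PiM'[OF False])
    show "\<And>i. i \<in> I \<Longrightarrow> (\<lambda>z. z i) \<in> measurable (PiM I (\<lambda>_. P)) P" by (auto intro!: measurable_component_singleton)
    have "distr (PiM I (\<lambda>_. P)) (PiM I (\<lambda>_. P)) (\<lambda>x. \<lambda>i\<in>I. x i) = distr (PiM I (\<lambda>_. P)) (PiM I (\<lambda>_. P)) (\<lambda>x. x)"
      by (intro distr_cong) (auto simp: space_PiM PiE_def extensional_def restrict_def)
    also have "\<dots> = PiM I (\<lambda>_. P)" by simp
    also have "\<dots> = PiM I (\<lambda>i. distr (PiM I (\<lambda>_. P)) P (\<lambda>x. x i))"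
      by (intro PiM_cong refl distr_PiM_component[symmetric]) (use P in auto)
    finally show "distr (PiM I (\<lambda>_. P)) (PiM I (\<lambda>_. P)) (\<lambda>x. \<lambda>i\<in>I. x i) = PiM I (\<lambda>i. distr (PiM I (\<lambda>_. P)) P (\<lambda>x. x i))" .
  qed
qed




lemma coord_integral:
  assumes P: "prob_space P" and i: "i \<in> I" and h: "(h::_\<Rightarrow>real) \<in> borel_measurable P"
  shows "(\<integral>z. h (z i) \<partial>PiM I (\<lambda>_. P)) = (\<integral>x. h x \<partial>P)"
proof -
  have "(\<integral>z. h (z i) \<partial>PiM I (\<lambda>_. P)) = (\<integral>x. h x \<partial>distr (PiM I (\<lambda>_. P)) P (\<lambda>z. z i))"
    by (intro integral_distr[symmetric] measurable_component_singleton i h)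
  also have "distr (PiM I (\<lambda>_. P)) P (\<lambda>z. z i) = P"
    using distr_PiM_component[of I "\<lambda>_. P" i] P i by auto
  finally show ?thesis .
qed

lemma coord_integrable:
  assumes P: "prob_space P" and i: "i \<in> I" and h: "integrable P (h::_\<Rightarrow>real)"
  shows "integrable (PiM I (\<lambda>_. P)) (\<lambda>z. h (z i))"
proof -
  have "distr (PiM I (\<lambda>_. P)) P (\<lambda>z. z i) = P"
    using distr_PiM_component[of I "\<lambda>_. P" i] P i by auto
  then have "integrable (distr (PiM I (\<lambda>_. P)) P (\<lambda>z. z i)) h" using h by simp
  then show ?thesis
    using integrable_distr_eq[of "\<lambda>z. z i" "PiM I (\<lambda>_. P)" P h] i h
    by (auto intro: measurable_component_singleton)
qed

lemma block_second_moment: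
  fixes W :: "'b \<Rightarrow> real"
  assumes P: "prob_space P" and W: "W \<in> borel_measurable P"
    and W2: "integrable P (\<lambda>x. (W x)\<^sup>2)" and K: "finite K" "K \<subseteq> I"
  defines "\<mu> \<equiv> (\<integral>x. W x \<partial>P)"
  shows "(\<integral>z. (\<Sum>i\<in>K. W (z i) - \<mu>)\<^sup>2 \<partial>PiM I (\<lambda>_. P)) = real (card K) * (\<integral>x. (W x - \<mu>)\<^sup>2 \<partial>P)"
    and "integrable (PiM I (\<lambda>_. P)) (\<lambda>z. (\<Sum>i\<in>K. W (z i) - \<mu>)\<^sup>2)"
proof -
  interpret N: prob_space "PiM I (\<lambda>_. P)" using P by (intro prob_space_PiM) auto
  interpret P: prob_space P by (rule P)
  define V where "V = (\<lambda>x. W x - \<mu>)"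
  have Vm[measurable]: "V \<in> borel_measurable P" unfolding V_def using W by auto
  have W1: "integrable P W" using W2 W P.square_integrable_imp_integrable by blast
  have V1: "integrable P V" using W1 by (simp add: V_def)
  have V2: "integrable P (\<lambda>x. (V x)\<^sup>2)"
    unfolding V_def power2_diff using W2 W1 by (intro Bochner_Integration.integrable_diff Bochner_Integration.integrable_add) auto
  have EV: "(\<integral>x. V x \<partial>P) = 0" using W1 by (simp add: V_def \<mu>_def P.prob_space)
  have ind: "N.indep_vars (\<lambda>_. P) (\<lambda>i z. z i) I" by (rule coord_indep[OF P])
  have int_ij: "integrable (PiM I (\<lambda>_. P)) (\<lambda>z. V (z i) * V (z j))" if "i \<in> I" "j \<in> I" for i j
  proof (rule Bochner_Integration.integrable_bound)
    show "integrable (PiM I (\<lambda>_. P)) (\<lambda>z. (V (z i))\<^sup>2 + (V (z j))\<^sup>2)"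
      by (rule Bochner_Integration.integrable_add[OF coord_integrable[OF P that(1) V2] coord_integrable[OF P that(2) V2]])
    show "(\<lambda>z. V (z i) * V (z j)) \<in> borel_measurable (PiM I (\<lambda>_. P))"
      using that by measurable
    show "AE z in PiM I (\<lambda>_. P). norm (V (z i) * V (z j)) \<le> norm ((V (z i))\<^sup>2 + (V (z j))\<^sup>2)"
    proof (intro AE_I2)
      fix z
      have "2 * \<bar>V (z i)\<bar> * \<bar>V (z j)\<bar> \<le> (V (z i))\<^sup>2 + (V (z j))\<^sup>2"
        using sum_squares_bound[of "\<bar>V (z i)\<bar>" "\<bar>V (z j)\<bar>"] by (simp add: power2_eq_square mult.assoc)
      moreover have "0 \<le> \<bar>V (z i)\<bar> * \<bar>V (z j)\<bar>" by simp
      ultimately have "\<bar>V (z i)\<bar> * \<bar>V (z j)\<bar> \<le> (V (z i))\<^sup>2 + (V (z j))\<^sup>2" by linarith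
      then show "norm (V (z i) * V (z j)) \<le> norm ((V (z i))\<^sup>2 + (V (z j))\<^sup>2)"
        by (simp add: abs_mult)
    qed
  qed
  have E_ij: "(\<integral>z. V (z i) * V (z j) \<partial>PiM I (\<lambda>_. P)) = (if i = j then (\<integral>x. (V x)\<^sup>2 \<partial>P) else 0)"
    if "i \<in> I" "j \<in> I" for i j
  proof (cases "i = j")
    case True
    then show ?thesis using coord_integral[OF P that(1), of "\<lambda>x. (V x)\<^sup>2"] by (simp add: power2_eq_square)
  next
    case False
    have iv: "N.indep_var P (\<lambda>z. z i) P (\<lambda>z. z j)"
    proof -
      have "N.indep_var (PiM {i} (\<lambda>_. P)) (\<lambda>z. restrict (\<lambda>k. z k) {i}) (PiM {j} (\<lambda>_. P)) (\<lambda>z. restrict (\<lambda>k. z k) {j})"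
        by (rule N.indep_var_restrict[OF ind]) (use that False in auto)
      then have "N.indep_var P ((\<lambda>r. r i) \<circ> (\<lambda>z. restrict (\<lambda>k. z k) {i})) P ((\<lambda>r. r j) \<circ> (\<lambda>z. restrict (\<lambda>k. z k) {j}))"
        by (rule N.indep_var_compose) (auto intro!: measurable_component_singleton)
      then show ?thesis by (simp add: comp_def)
    qed
    then have "N.indep_var borel (V \<circ> (\<lambda>z. z i)) borel (V \<circ> (\<lambda>z. z j))"
      by (rule N.indep_var_compose) auto
    then have "(\<integral>z. V (z i) * V (z j) \<partial>PiM I (\<lambda>_. P)) = (\<integral>z. V (z i) \<partial>PiM I (\<lambda>_. P)) * (\<integral>z. V (z j) \<partial>PiM I (\<lambda>_. P))"
      using N.indep_var_lebesgue_integral[of "\<lambda>z. V (z i)" "\<lambda>z. V (z j)"] coord_integrable[OF P that(1) V1] coord_integrable[OF P that(2) V1]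
      by (auto simp: comp_def)
    also have "\<dots> = 0" using coord_integral[OF P that(1) Vm] EV by simp
    finally show ?thesis using False by simp
  qed
  have sq: "(\<Sum>i\<in>K. W (z i) - \<mu>)\<^sup>2 = (\<Sum>i\<in>K. \<Sum>j\<in>K. V (z i) * V (z j))" for z
    by (simp add: V_def power2_eq_square sum_product)
  show "integrable (PiM I (\<lambda>_. P)) (\<lambda>z. (\<Sum>i\<in>K. W (z i) - \<mu>)\<^sup>2)"
    unfolding sq using K int_ij by (intro Bochner_Integration.integrable_sum) auto
  have "(\<integral>z. (\<Sum>i\<in>K. W (z i) - \<mu>)\<^sup>2 \<partial>PiM I (\<lambda>_. P)) = (\<Sum>i\<in>K. \<Sum>j\<in>K. \<integral>z. V (z i) * V (z j) \<partial>PiM I (\<lambda>_. P))"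
    unfolding sq using K int_ij
    by (subst Bochner_Integration.integral_sum, fastforce intro!: Bochner_Integration.integrable_sum)
       (auto intro!: sum.cong Bochner_Integration.integral_sum)
  also have "\<dots> = (\<Sum>i\<in>K. \<integral>x. (V x)\<^sup>2 \<partial>P)"
    using K by (intro sum.cong refl) (auto simp: E_ij subset_iff)
  also have "\<dots> = real (card K) * (\<integral>x. (W x - \<mu>)\<^sup>2 \<partial>P)" by (simp add: V_def)
  finally show "(\<integral>z. (\<Sum>i\<in>K. W (z i) - \<mu>)\<^sup>2 \<partial>PiM I (\<lambda>_. P)) = real (card K) * (\<integral>x. (W x - \<mu>)\<^sup>2 \<partial>P)" .
qed




lemma coord_meas:
  assumes "i \<in> I" "W \<in> borel_measurable P"
  shows "(\<lambda>z. W (z i)) \<in> borel_measurable (PiM I (\<lambda>_. P))"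
  using measurable_compose[of "\<lambda>z. z i" "PiM I (\<lambda>_. P)" P W borel] assms
    measurable_component_singleton[of i I "\<lambda>_. P"] by auto

lemma block_cheb:
  fixes W :: "'b \<Rightarrow> real"
  assumes P: "prob_space P" and W: "W \<in> borel_measurable P"
    and W2: "integrable P (\<lambda>x. (W x)\<^sup>2)" and K: "finite K" "K \<subseteq> I" "card K > 0" and t: "t > 0"
  defines "\<mu> \<equiv> (\<integral>x. W x \<partial>P)"
  shows "measure (PiM I (\<lambda>_. P)) {z \<in> space (PiM I (\<lambda>_. P)). t \<le> \<bar>(\<Sum>i\<in>K. W (z i)) / real (card K) - \<mu>\<bar>}
     \<le> (\<integral>x. (W x - \<mu>)\<^sup>2 \<partial>P) / (real (card K) * t\<^sup>2)"
proof -
  interpret N: prob_space "PiM I (\<lambda>_. P)" using P by (intro prob_space_PiM) auto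
  interpret P: prob_space P by (rule P)
  define S where "S = (\<lambda>z. (\<Sum>i\<in>K. W (z i) - \<mu>))"
  have Sm[measurable]: "S \<in> borel_measurable (PiM I (\<lambda>_. P))"
    unfolding S_def using K W by (intro borel_measurable_sum borel_measurable_diff) (auto intro!: coord_meas[OF _ W])
  have W1: "integrable P W" using W2 W P.square_integrable_imp_integrable by blast
  have S2: "integrable (PiM I (\<lambda>_. P)) (\<lambda>z. (S z)^2)"
    using block_second_moment(2)[OF P W W2 K(1,2)] by (simp add: S_def \<mu>_def)
  have ES: "N.expectation S = 0"
  proof -
    have "N.expectation S = (\<Sum>i\<in>K. \<integral>z. W (z i) - \<mu> \<partial>PiM I (\<lambda>_. P))"
      unfolding S_def
      by (intro Bochner_Integration.integral_sum) 
         (use K W1 in \<open>auto intro!: Bochner_Integration.integrable_diff coord_integrable[OF P] simp: subset_iff\<close>)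
    also have "\<dots> = (\<Sum>i\<in>K. 0)"
    proof (intro sum.cong refl)
      fix i assume "i \<in> K"
      then have i: "i \<in> I" using K by auto
      have "(\<integral>z. W (z i) - \<mu> \<partial>PiM I (\<lambda>_. P)) = (\<integral>x. W x - \<mu> \<partial>P)"
        by (rule coord_integral[OF P i]) (use W in auto)
      also have "\<dots> = 0" using W1 by (simp add: \<mu>_def P.prob_space)
      finally show "(\<integral>z. W (z i) - \<mu> \<partial>PiM I (\<lambda>_. P)) = 0" .
    qed
    finally show ?thesis by simp
  qed
  have VS: "N.variance S = real (card K) * (\<integral>x. (W x - \<mu>)\<^sup>2 \<partial>P)"
    using block_second_moment(1)[OF P W W2 K(1,2)] ES by (simp add: S_def \<mu>_def)
  have eq: "{z \<in> space (PiM I (\<lambda>_. P)). t \<le> \<bar>(\<Sum>i\<in>K. W (z i)) / real (card K) - \<mu>\<bar>}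
     = {z \<in> space (PiM I (\<lambda>_. P)). \<bar>S z - N.expectation S\<bar> \<ge> real (card K) * t}"
  proof -
    have "t \<le> \<bar>(\<Sum>i\<in>K. W (z i)) / real (card K) - \<mu>\<bar> \<longleftrightarrow> real (card K) * t \<le> \<bar>S z\<bar>" for z
    proof -
      have "(\<Sum>i\<in>K. W (z i)) / real (card K) - \<mu> = S z / real (card K)"
      proof -
        have c0: "real (card K) \<noteq> 0" using K(3) by linarith
        have "S z = (\<Sum>i\<in>K. W (z i)) - real (card K) * \<mu>" by (simp add: S_def sum_subtractf)
        then have "S z / real (card K) = (\<Sum>i\<in>K. W (z i)) / real (card K) - (real (card K) * \<mu>) / real (card K)"
          by (simp add: diff_divide_distrib)
        also have "(real (card K) * \<mu>) / real (card K) = \<mu>" using c0 by simp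
        finally show ?thesis by simp
      qed
      moreover have c: "real (card K) > 0" using K by simp
      moreover have "\<bar>S z / real (card K)\<bar> = \<bar>S z\<bar> / real (card K)" using c by simp
      ultimately show ?thesis using c by (metis pos_le_divide_eq mult.commute)
    qed
    then show ?thesis by (simp add: ES)
  qed
  have "measure (PiM I (\<lambda>_. P)) {z \<in> space (PiM I (\<lambda>_. P)). \<bar>S z - N.expectation S\<bar> \<ge> real (card K) * t}
      \<le> N.variance S / (real (card K) * t)\<^sup>2"
    by (rule N.Chebyshev_inequality[OF Sm S2]) (use K t in auto)
  also have "\<dots> = (\<integral>x. (W x - \<mu>)\<^sup>2 \<partial>P) / (real (card K) * t\<^sup>2)"
  proof -
    define X where "X = (\<integral>x. (W x - \<mu>)\<^sup>2 \<partial>P)"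
    have c: "real (card K) > 0" using K by simp
    have "real (card K) * X / (real (card K) * t)\<^sup>2 = X / (real (card K) * t\<^sup>2)"
      using c t by (simp add: power2_eq_square field_simps)
    then show ?thesis unfolding VS X_def .
  qed
  finally show ?thesis unfolding eq .
qed




lemma mom:
  fixes W :: "'b \<Rightarrow> real"
  assumes P: "prob_space P" and W[measurable]: "W \<in> borel_measurable P"
    and W2: "integrable P (\<lambda>x. (W x)\<^sup>2)" and m: "m > 0" and t: "t > 0" and kmn: "k * m \<le> n"
    and v: "(\<integral>x. (W x - (\<integral>x. W x \<partial>P))\<^sup>2 \<partial>P) / (real m * t\<^sup>2) \<le> 1/4"
  shows "measure (PiM {..<n} (\<lambda>_. P)) {z \<in> space (PiM {..<n} (\<lambda>_. P)).
      real k / 2 \<le> (\<Sum>b<k. if t \<le> \<bar>(\<Sum>i\<in>{b*m..<b*m+m}. W (z i)) / real m - (\<integral>x. W x \<partial>P)\<bar> then 1 else 0)}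
    \<le> exp (- real k / 8)"
proof -
  define \<mu> where "\<mu> = (\<integral>x. W x \<partial>P)"
  define N where "N = PiM {..<n} (\<lambda>_. P)"
  interpret N: prob_space N unfolding N_def using P by (intro prob_space_PiM) auto
  define K where "K b = {b*m..<b*m+m}" for b
  define X where "X b z = (if t \<le> \<bar>(\<Sum>i\<in>K b. W (z i)) / real m - \<mu>\<bar> then 1 else (0::real))" for b z
  define A where "A b = {z \<in> space N. t \<le> \<bar>(\<Sum>i\<in>K b. W (z i)) / real m - \<mu>\<bar>}" for b
  show ?thesis
  proof (cases "k = 0")
    case True
    then show ?thesis using N.prob_space by (simp add: N_def)
  next
    case False
    then have k: "k > 0" by simp
    have Ksub: "K b \<subseteq> {..<n}" if "b < k" for b
    proof -
      have "b * m + m \<le> k * m" using that by (metis Suc_leI mult_Suc mult_le_mono1 add.commute)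
      then show ?thesis using kmn by (auto simp: K_def)
    qed
    have cardK: "card (K b) = m" for b by (simp add: K_def)
    have disj: "disjoint_family_on K {..<k}"
    proof (unfold disjoint_family_on_def, intro ballI impI)
      fix a b assume "a \<in> {..<k}" "b \<in> {..<k}" "a \<noteq> b"
      then consider "a < b" | "b < a" by linarith
      then show "K a \<inter> K b = {}"
      proof cases
        case 1
        then have "a * m + m \<le> b * m" by (metis Suc_leI mult_Suc mult_le_mono1 add.commute)
        then show ?thesis by (auto simp: K_def)
      next
        case 2
        then have "b * m + m \<le> a * m" by (metis Suc_leI mult_Suc mult_le_mono1 add.commute)
        then show ?thesis by (auto simp: K_def)
      qed
    qed
    have ind0: "N.indep_vars (\<lambda>_. P) (\<lambda>i z. z i) {..<n}"
      unfolding N_def by (rule coord_indep[OF P])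
    have ind1: "N.indep_vars (\<lambda>b. PiM (K b) (\<lambda>_. P)) (\<lambda>b z. restrict (\<lambda>i. z i) (K b)) {..<k}"
      by (rule N.indep_vars_restrict[OF ind0]) (use Ksub disj in auto)
    define Y where "Y b r = (if t \<le> \<bar>(\<Sum>i\<in>K b. W (r i)) / real m - \<mu>\<bar> then 1 else (0::real))" for b r
    have Ym: "Y b \<in> borel_measurable (PiM (K b) (\<lambda>_. P))" for b
      unfolding Y_def by measurable
    have ind2: "N.indep_vars (\<lambda>_. borel) (\<lambda>b z. Y b (restrict (\<lambda>i. z i) (K b))) {..<k}"
      by (rule N.indep_vars_compose2[OF ind1 Ym])
    have ind: "N.indep_vars (\<lambda>_. borel) X {..<k}"
      by (rule N.indep_vars_cong[THEN iffD1, OF refl _ refl ind2]) (auto simp: X_def Y_def fun_eq_iff)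
    interpret H: Hoeffding_ineq N "{..<k}" X "\<lambda>_. 0" "\<lambda>_. 1" "\<Sum>b<k. N.expectation (X b)"
      by unfold_locales (auto simp: ind X_def)
    have EX: "N.expectation (X b) \<le> 1/4" if "b < k" for b
    proof -
      have "N.expectation (X b) = N.expectation (indicator (A b))"
        by (intro Bochner_Integration.integral_cong) (auto simp: X_def A_def indicator_def)
      also have "\<dots> = measure N (A b)"
      proof -
        have "A b \<in> sets N" unfolding A_def N_def by measurable (use Ksub[OF that] in auto)
        then show ?thesis by (simp add: N.emeasure_eq_measure)
      qed
      also have "\<dots> \<le> (\<integral>x. (W x - \<mu>)\<^sup>2 \<partial>P) / (real (card (K b)) * t\<^sup>2)"
        using block_cheb[OF P W W2, of "K b" "{..<n}" t] Ksub[OF that] m t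
        unfolding A_def N_def \<mu>_def by (simp add: cardK K_def)
      also have "\<dots> \<le> 1/4" using v by (simp add: cardK \<mu>_def)
      finally show ?thesis .
    qed
    have muH: "(\<Sum>b<k. N.expectation (X b)) \<le> real k / 4"
      using sum_mono[of "{..<k}" "\<lambda>b. N.expectation (X b)" "\<lambda>_. 1/4"] EX by simp
    have "measure N {z \<in> space N. real k / 2 \<le> (\<Sum>b<k. X b z)}
        \<le> measure N {z \<in> space N. (\<Sum>b<k. N.expectation (X b)) + real k / 4 \<le> (\<Sum>b<k. X b z)}"
      by (rule N.finite_measure_mono) (use muH in auto)
    also have "\<dots> \<le> exp (-2 * (real k / 4)\<^sup>2 / (\<Sum>b<k. (1 - 0)\<^sup>2))"
      by (rule H.Hoeffding_ineq_ge) (use k in auto)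
    also have "\<dots> = exp (- real k / 8)"
      using k by (simp add: power2_eq_square field_simps)
    finally show ?thesis unfolding N_def X_def K_def \<mu>_def .
  qed
qed




lemma regr_alt: "regr_law Q g \<sigma> = density (Q \<Otimes>\<^sub>M lborel) (\<lambda>z. ennreal (normal_density (g (fst z)) \<sigma> (snd z)))"
  unfolding regr_law_def by (intro arg_cong[where f="density _"]) (auto simp: fun_eq_iff split: prod.split)

lemma sets_regr[simp, measurable_cong]: "sets (regr_law Q g \<sigma>) = sets (Q \<Otimes>\<^sub>M lborel)"
  by (simp add: regr_alt)

lemma space_regr[simp]: "space (regr_law Q g \<sigma>) = space (Q \<Otimes>\<^sub>M lborel)"
  by (simp add: regr_alt)

context
  fixes Q :: "'a measure" and g :: "'a \<Rightarrow> real" and \<sigma> :: real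
  assumes Q: "prob_space Q" and g[measurable]: "g \<in> borel_measurable Q" and sigma: "\<sigma> > 0"
begin

interpretation Q: prob_space Q by (rule Q)
interpretation QL: pair_sigma_finite Q lborel by unfold_locales

lemma nd_meas[measurable]: "(\<lambda>z. normal_density (g (fst z)) \<sigma> (snd z)) \<in> borel_measurable (Q \<Otimes>\<^sub>M lborel)"
  unfolding normal_density_def by measurable

lemma regr_nn:
  assumes F[measurable]: "F \<in> borel_measurable (Q \<Otimes>\<^sub>M lborel)"
  shows "(\<integral>\<^sup>+z. F z \<partial>regr_law Q g \<sigma>) = (\<integral>\<^sup>+x. \<integral>\<^sup>+y. ennreal (normal_density (g x) \<sigma> y) * F (x, y) \<partial>lborel \<partial>Q)"
proof -
  have "(\<integral>\<^sup>+z. F z \<partial>regr_law Q g \<sigma>) = (\<integral>\<^sup>+z. ennreal (normal_density (g (fst z)) \<sigma> (snd z)) * F z \<partial>(Q \<Otimes>\<^sub>M lborel))"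
    unfolding regr_alt by (rule nn_integral_density) measurable
  also have "\<dots> = (\<integral>\<^sup>+x. \<integral>\<^sup>+y. ennreal (normal_density (g x) \<sigma> y) * F (x, y) \<partial>lborel \<partial>Q)"
    by (rule lborel.nn_integral_fst[symmetric, where f="\<lambda>z. ennreal (normal_density (g (fst z)) \<sigma> (snd z)) * F z", simplified]) measurable
  finally show ?thesis .
qed

lemma regr_prob: "prob_space (regr_law Q g \<sigma>)"
proof (rule prob_spaceI)
  have "emeasure (regr_law Q g \<sigma>) (space (regr_law Q g \<sigma>)) = (\<integral>\<^sup>+z. 1 \<partial>regr_law Q g \<sigma>)"
    by simp
  also have "\<dots> = (\<integral>\<^sup>+x. \<integral>\<^sup>+y. ennreal (normal_density (g x) \<sigma> y) \<partial>lborel \<partial>Q)"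
    by (subst regr_nn) auto
  also have "\<dots> = (\<integral>\<^sup>+x. 1 \<partial>Q)"
  proof (intro nn_integral_cong)
    fix x
    have "(\<integral>\<^sup>+y. ennreal (normal_density (g x) \<sigma> y) \<partial>lborel) = ennreal (\<integral>y. normal_density (g x) \<sigma> y \<partial>lborel)"
      by (intro nn_integral_eq_integral) (use sigma in auto)
    also have "\<dots> = 1" using sigma by simp
    finally show "(\<integral>\<^sup>+y. ennreal (normal_density (g x) \<sigma> y) \<partial>lborel) = 1" .
  qed
  also have "\<dots> = 1" using Q.emeasure_space_1 by simp
  finally show "emeasure (regr_law Q g \<sigma>) (space (regr_law Q g \<sigma>)) = 1" .
qed

lemma regr_int:
  fixes F :: "'a \<times> real \<Rightarrow> real"
  assumes F[measurable]: "F \<in> borel_measurable (Q \<Otimes>\<^sub>M lborel)" and int: "integrable (regr_law Q g \<sigma>) F"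
  shows "(\<integral>z. F z \<partial>regr_law Q g \<sigma>) = (\<integral>x. \<integral>y. normal_density (g x) \<sigma> y * F (x, y) \<partial>lborel \<partial>Q)"
proof -
  have int2: "integrable (Q \<Otimes>\<^sub>M lborel) (\<lambda>z. normal_density (g (fst z)) \<sigma> (snd z) *\<^sub>R F z)"
    using int unfolding regr_alt by (subst (asm) integrable_density) auto
  have "(\<integral>z. F z \<partial>regr_law Q g \<sigma>) = (\<integral>z. normal_density (g (fst z)) \<sigma> (snd z) *\<^sub>R F z \<partial>(Q \<Otimes>\<^sub>M lborel))"
    unfolding regr_alt by (rule integral_density) auto
  also have "\<dots> = (\<integral>x. \<integral>y. normal_density (g x) \<sigma> y * F (x, y) \<partial>lborel \<partial>Q)"
    using QL.integral_fst'[OF int2] by simp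
  finally show ?thesis .
qed

end




lemma inner1:
  assumes s: "\<sigma> > 0"
  shows "(\<integral>y. normal_density c \<sigma> y * (h * (y - a)) \<partial>lborel) = h * (c - a)"
    and "integrable lborel (\<lambda>y. normal_density c \<sigma> y * (h * (y - a)))"
proof -
  have e: "(\<lambda>y. normal_density c \<sigma> y * (h * (y - a))) = (\<lambda>y. h * (normal_density c \<sigma> y * (y - c)^1) + h * (c - a) * normal_density c \<sigma> y)"
    by (auto simp: fun_eq_iff algebra_simps)
  have i1: "integrable lborel (\<lambda>y. normal_density c \<sigma> y * (y - c)^1)"
    by (rule integrable_normal_moment[OF s])
  have i0: "integrable lborel (normal_density c \<sigma>)" using s by simp
  have v1: "(\<integral>y. normal_density c \<sigma> y * (y - c)^(2*0+1) \<partial>lborel) = 0"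
    by (rule integral_normal_moment_odd[OF s])
  show "integrable lborel (\<lambda>y. normal_density c \<sigma> y * (h * (y - a)))"
    unfolding e using i1 i0 by auto
  show "(\<integral>y. normal_density c \<sigma> y * (h * (y - a)) \<partial>lborel) = h * (c - a)"
    unfolding e using i1 i0 v1 s by simp
qed

lemma inner2:
  assumes s: "\<sigma> > 0"
  shows "(\<integral>y. normal_density c \<sigma> y * (h * (y - a))\<^sup>2 \<partial>lborel) = h\<^sup>2 * ((c - a)\<^sup>2 + \<sigma>\<^sup>2)"
    and "integrable lborel (\<lambda>y. normal_density c \<sigma> y * (h * (y - a))\<^sup>2)"
proof -
  have e: "(\<lambda>y. normal_density c \<sigma> y * (h * (y - a))\<^sup>2) = (\<lambda>y. h\<^sup>2 * (normal_density c \<sigma> y * (y - c)^2)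
       + 2 * h\<^sup>2 * (c - a) * (normal_density c \<sigma> y * (y - c)^1) + h\<^sup>2 * (c - a)\<^sup>2 * normal_density c \<sigma> y)"
    by (auto simp: fun_eq_iff power2_eq_square algebra_simps)
  have i2: "integrable lborel (\<lambda>y. normal_density c \<sigma> y * (y - c)^2)"
    by (rule integrable_normal_moment[OF s])
  have i1: "integrable lborel (\<lambda>y. normal_density c \<sigma> y * (y - c)^1)"
    by (rule integrable_normal_moment[OF s])
  have i0: "integrable lborel (normal_density c \<sigma>)" using s by simp
  have v1: "(\<integral>y. normal_density c \<sigma> y * (y - c)^(2*0+1) \<partial>lborel) = 0"
    by (rule integral_normal_moment_odd[OF s])
  have v2: "(\<integral>y. normal_density c \<sigma> y * (y - c)^(2*1) \<partial>lborel) = fact (2*1) / ((2 / \<sigma>\<^sup>2)^1 * fact 1)"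
    by (rule integral_normal_moment_even[OF s])
  have v2': "(\<integral>y. normal_density c \<sigma> y * (y - c)^2 \<partial>lborel) = \<sigma>\<^sup>2"
    using v2 s by simp
  show "integrable lborel (\<lambda>y. normal_density c \<sigma> y * (h * (y - a))\<^sup>2)"
    unfolding e using i2 i1 i0 by auto
  show "(\<integral>y. normal_density c \<sigma> y * (h * (y - a))\<^sup>2 \<partial>lborel) = h\<^sup>2 * ((c - a)\<^sup>2 + \<sigma>\<^sup>2)"
  proof -
    let ?A = "\<lambda>y. h\<^sup>2 * (normal_density c \<sigma> y * (y - c)^2)"
    let ?B = "\<lambda>y. 2 * h\<^sup>2 * (c - a) * (normal_density c \<sigma> y * (y - c)^1)"
    let ?C = "\<lambda>y. h\<^sup>2 * (c - a)\<^sup>2 * normal_density c \<sigma> y"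
    have iA: "integrable lborel ?A" using i2 by auto
    have iB: "integrable lborel ?B" using i1 by auto
    have iC: "integrable lborel ?C" using i0 by auto
    have "(\<integral>y. ?A y + ?B y + ?C y \<partial>lborel) = (\<integral>y. ?A y \<partial>lborel) + (\<integral>y. ?B y \<partial>lborel) + (\<integral>y. ?C y \<partial>lborel)"
      using iA iB iC by (simp add: Bochner_Integration.integral_add)
    also have "(\<integral>y. ?A y \<partial>lborel) = h\<^sup>2 * \<sigma>\<^sup>2" using v2' by (simp only: Bochner_Integration.integral_mult_right_zero)
    also have "(\<integral>y. ?B y \<partial>lborel) = 0" using v1 by (simp only: Bochner_Integration.integral_mult_right_zero) simp
    also have "(\<integral>y. ?C y \<partial>lborel) = h\<^sup>2 * (c - a)\<^sup>2" using s by (simp only: Bochner_Integration.integral_mult_right_zero) simp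
    finally show ?thesis unfolding e by (simp add: algebra_simps)
  qed
qed

lemma regr_W:
  fixes Q :: "'a measure" and g h a :: "'a \<Rightarrow> real"
  assumes Q: "prob_space Q" and g[measurable]: "g \<in> borel_measurable Q" and sigma: "\<sigma> > 0"
    and h[measurable]: "h \<in> borel_measurable Q" and a[measurable]: "a \<in> borel_measurable Q"
    and int: "integrable Q (\<lambda>x. (h x)\<^sup>2 * ((g x - a x)\<^sup>2 + \<sigma>\<^sup>2))"
  defines "W \<equiv> (\<lambda>z. h (fst z) * (snd z - a (fst z)))"
  shows "W \<in> borel_measurable (regr_law Q g \<sigma>)"
    and "integrable (regr_law Q g \<sigma>) (\<lambda>z. (W z)\<^sup>2)"
    and "(\<integral>z. (W z)\<^sup>2 \<partial>regr_law Q g \<sigma>) = (\<integral>x. (h x)\<^sup>2 * ((g x - a x)\<^sup>2 + \<sigma>\<^sup>2) \<partial>Q)"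
    and "integrable Q (\<lambda>x. h x * (g x - a x)) \<Longrightarrow> (\<integral>z. W z \<partial>regr_law Q g \<sigma>) = (\<integral>x. h x * (g x - a x) \<partial>Q)"
proof -
  interpret R: prob_space "regr_law Q g \<sigma>" by (rule regr_prob[OF Q g sigma])
  have Wm[measurable]: "W \<in> borel_measurable (Q \<Otimes>\<^sub>M lborel)" unfolding W_def by measurable
  then show Wm': "W \<in> borel_measurable (regr_law Q g \<sigma>)" by simp
  have nn: "(\<integral>\<^sup>+z. ennreal ((W z)\<^sup>2) \<partial>regr_law Q g \<sigma>) = (\<integral>\<^sup>+x. ennreal ((h x)\<^sup>2 * ((g x - a x)\<^sup>2 + \<sigma>\<^sup>2)) \<partial>Q)"
  proof -
    have "(\<integral>\<^sup>+z. ennreal ((W z)\<^sup>2) \<partial>regr_law Q g \<sigma>) = (\<integral>\<^sup>+x. \<integral>\<^sup>+y. ennreal (normal_density (g x) \<sigma> y) * ennreal ((W (x,y))\<^sup>2) \<partial>lborel \<partial>Q)"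
      by (rule regr_nn[OF Q g sigma]) measurable
    also have "\<dots> = (\<integral>\<^sup>+x. ennreal ((h x)\<^sup>2 * ((g x - a x)\<^sup>2 + \<sigma>\<^sup>2)) \<partial>Q)"
    proof (intro nn_integral_cong)
      fix x
      have "(\<integral>\<^sup>+y. ennreal (normal_density (g x) \<sigma> y) * ennreal ((W (x,y))\<^sup>2) \<partial>lborel)
         = (\<integral>\<^sup>+y. ennreal (normal_density (g x) \<sigma> y * (h x * (y - a x))\<^sup>2) \<partial>lborel)"
        by (intro nn_integral_cong) (simp add: W_def ennreal_mult)
      also have "\<dots> = ennreal (\<integral>y. normal_density (g x) \<sigma> y * (h x * (y - a x))\<^sup>2 \<partial>lborel)"
        by (intro nn_integral_eq_integral inner2(2)[OF sigma]) auto
      also have "\<dots> = ennreal ((h x)\<^sup>2 * ((g x - a x)\<^sup>2 + \<sigma>\<^sup>2))"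
        by (simp add: inner2(1)[OF sigma])
      finally show "(\<integral>\<^sup>+y. ennreal (normal_density (g x) \<sigma> y) * ennreal ((W (x,y))\<^sup>2) \<partial>lborel) = ennreal ((h x)\<^sup>2 * ((g x - a x)\<^sup>2 + \<sigma>\<^sup>2))" .
    qed
    finally show ?thesis .
  qed
  also have "\<dots> = ennreal (\<integral>x. (h x)\<^sup>2 * ((g x - a x)\<^sup>2 + \<sigma>\<^sup>2) \<partial>Q)"
    by (intro nn_integral_eq_integral int) auto
  finally have nn2: "(\<integral>\<^sup>+z. ennreal ((W z)\<^sup>2) \<partial>regr_law Q g \<sigma>) = ennreal (\<integral>x. (h x)\<^sup>2 * ((g x - a x)\<^sup>2 + \<sigma>\<^sup>2) \<partial>Q)" .
  show W2: "integrable (regr_law Q g \<sigma>) (\<lambda>z. (W z)\<^sup>2)"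
    by (rule integrableI_nonneg) (use Wm' nn2 in auto)
  show "(\<integral>z. (W z)\<^sup>2 \<partial>regr_law Q g \<sigma>) = (\<integral>x. (h x)\<^sup>2 * ((g x - a x)\<^sup>2 + \<sigma>\<^sup>2) \<partial>Q)"
  proof -
    have "ennreal (\<integral>z. (W z)\<^sup>2 \<partial>regr_law Q g \<sigma>) = (\<integral>\<^sup>+z. ennreal ((W z)\<^sup>2) \<partial>regr_law Q g \<sigma>)"
      by (rule nn_integral_eq_integral[symmetric]) (use W2 in auto)
    also note nn2
    finally show ?thesis
      by (subst (asm) ennreal_inj) (auto intro!: integral_nonneg_AE)
  qed
  assume int1: "integrable Q (\<lambda>x. h x * (g x - a x))"
  have W1: "integrable (regr_law Q g \<sigma>) W"
    using W2 Wm' R.square_integrable_imp_integrable by blast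
  have "(\<integral>z. W z \<partial>regr_law Q g \<sigma>) = (\<integral>x. \<integral>y. normal_density (g x) \<sigma> y * W (x, y) \<partial>lborel \<partial>Q)"
    by (rule regr_int[OF Q g sigma Wm W1])
  also have "\<dots> = (\<integral>x. h x * (g x - a x) \<partial>Q)"
    by (intro Bochner_Integration.integral_cong refl) (simp add: W_def inner1(1)[OF sigma])
  finally show "(\<integral>z. W z \<partial>regr_law Q g \<sigma>) = (\<integral>x. h x * (g x - a x) \<partial>Q)" .
qed




function gs :: "'a measure \<Rightarrow> (nat \<Rightarrow> 'a \<Rightarrow> real) \<Rightarrow> nat \<Rightarrow> 'a \<Rightarrow> real" where
  "gs Q F k x = F k x - (\<Sum>i<k. ((\<integral>y. F k y * gs Q F i y \<partial>Q) / (\<integral>y. (gs Q F i y)\<^sup>2 \<partial>Q)) * gs Q F i x)"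
  by auto
termination by (relation "Wellfounded.measure (\<lambda>(Q,F,k,x). k)") auto

declare gs.simps[simp del]

lemma bnd_int:
  fixes f :: "'a \<Rightarrow> real"
  assumes "prob_space Q" "f \<in> borel_measurable Q" "\<And>x. x \<in> space Q \<Longrightarrow> \<bar>f x\<bar> \<le> B"
  shows "integrable Q f"
proof -
  interpret prob_space Q by fact
  show ?thesis
    by (rule Bochner_Integration.integrable_bound[of Q "\<lambda>_. B"]) (use assms in \<open>auto intro!: AE_I2 intro: order_trans[OF _ abs_ge_self]\<close>)
qed

lemma bnd_mult_int:
  fixes f H :: "'a \<Rightarrow> real"
  assumes "f \<in> borel_measurable Q" "\<And>x. x \<in> space Q \<Longrightarrow> \<bar>f x\<bar> \<le> B" "integrable Q H"
  shows "integrable Q (\<lambda>x. f x * H x)"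
  by (rule Bochner_Integration.integrable_bound[of Q "\<lambda>x. B * \<bar>H x\<bar>"])
     (use assms in \<open>auto intro!: AE_I2 mult_right_mono intro: order_trans[OF _ abs_ge_self] simp: abs_mult\<close>)

context
  fixes Q :: "'a measure" and F :: "nat \<Rightarrow> 'a \<Rightarrow> real" and \<kappa> :: real
  assumes Q: "prob_space Q" and Fm: "\<And>j. F j \<in> borel_measurable Q"
    and Fb: "\<And>j x. x \<in> space Q \<Longrightarrow> \<bar>F j x\<bar> \<le> \<kappa>"
begin

interpretation Q: prob_space Q by (rule Q)

lemma gs_bnd: "gs Q F k \<in> borel_measurable Q \<and> (\<exists>B. \<forall>x\<in>space Q. \<bar>gs Q F k x\<bar> \<le> B)"
proof (induction k rule: less_induct)
  case (less k)
  then have "\<forall>i\<in>{..<k}. \<exists>B. \<forall>x\<in>space Q. \<bar>gs Q F i x\<bar> \<le> B" by auto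
  then obtain Bf where Bf: "\<And>i x. i < k \<Longrightarrow> x \<in> space Q \<Longrightarrow> \<bar>gs Q F i x\<bar> \<le> Bf i"
    by (metis lessThan_iff bchoice)
  define c where "c i = (\<integral>y. F k y * gs Q F i y \<partial>Q) / (\<integral>y. (gs Q F i y)\<^sup>2 \<partial>Q)" for i
  have e: "gs Q F k = (\<lambda>x. F k x - (\<Sum>i<k. c i * gs Q F i x))"
    by (rule ext) (subst gs.simps, simp add: c_def)
  have m: "gs Q F k \<in> borel_measurable Q"
    unfolding e using less Fm by (intro borel_measurable_diff borel_measurable_sum borel_measurable_times) auto
  have "\<forall>x\<in>space Q. \<bar>gs Q F k x\<bar> \<le> \<kappa> + (\<Sum>i<k. \<bar>c i\<bar> * Bf i)"
  proof
    fix x assume x: "x \<in> space Q"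
    have "\<bar>gs Q F k x\<bar> \<le> \<bar>F k x\<bar> + \<bar>\<Sum>i<k. c i * gs Q F i x\<bar>" unfolding e by simp
    also have "\<bar>\<Sum>i<k. c i * gs Q F i x\<bar> \<le> (\<Sum>i<k. \<bar>c i * gs Q F i x\<bar>)" by (rule sum_abs)
    also have "\<dots> \<le> (\<Sum>i<k. \<bar>c i\<bar> * Bf i)"
      by (intro sum_mono) (use Bf x in \<open>auto simp: abs_mult intro!: mult_left_mono\<close>)
    finally show "\<bar>gs Q F k x\<bar> \<le> \<kappa> + (\<Sum>i<k. \<bar>c i\<bar> * Bf i)" using Fb[OF x, of k] by linarith
  qed
  then show ?case using m by blast
qed

lemma gs_meas[measurable]: "gs Q F k \<in> borel_measurable Q" using gs_bnd by blast

lemma gs_prod_int: "integrable Q (\<lambda>x. gs Q F i x * gs Q F j x)"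
proof -
  obtain B1 where B1: "\<forall>x\<in>space Q. \<bar>gs Q F i x\<bar> \<le> B1" using gs_bnd by blast
  obtain B2 where B2: "\<forall>x\<in>space Q. \<bar>gs Q F j x\<bar> \<le> B2" using gs_bnd by blast
  have I: "integrable Q (gs Q F j)" by (rule bnd_int[OF Q gs_meas]) (use B2 in auto)
  show ?thesis using bnd_mult_int[OF gs_meas[of i] _ I] B1 by auto
qed

lemma Fgs_int: "integrable Q (\<lambda>x. F k x * gs Q F j x)"
proof -
  obtain B2 where B2: "\<forall>x\<in>space Q. \<bar>gs Q F j x\<bar> \<le> B2" using gs_bnd by blast
  have I: "integrable Q (gs Q F j)" by (rule bnd_int[OF Q gs_meas]) (use B2 in auto)
  show ?thesis using bnd_mult_int[OF Fm[of k] _ I] Fb by auto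
qed

lemma gs_null:
  assumes "(\<integral>y. (gs Q F j y)\<^sup>2 \<partial>Q) = 0"
  shows "AE x in Q. gs Q F j x = 0"
proof -
  have "integrable Q (\<lambda>x. (gs Q F j x)\<^sup>2)" using gs_prod_int[of j j] by (simp add: power2_eq_square)
  then have "AE x in Q. (gs Q F j x)\<^sup>2 = 0"
    using assms integral_nonneg_eq_0_iff_AE[of Q "\<lambda>x. (gs Q F j x)\<^sup>2"] by auto
  then show ?thesis by auto
qed

lemma ip_null:
  assumes "(\<integral>y. (gs Q F j y)\<^sup>2 \<partial>Q) = 0" and um: "u \<in> borel_measurable Q"
  shows "(\<integral>y. u y * gs Q F j y \<partial>Q) = 0"
proof -
  have "(\<integral>y. u y * gs Q F j y \<partial>Q) = (\<integral>y. 0 \<partial>Q)"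
    by (rule integral_cong_AE) (use gs_null[OF assms(1)] um in \<open>auto\<close>)
  then show ?thesis by simp
qed

lemma gs_orth: "j < k \<Longrightarrow> (\<integral>y. gs Q F k y * gs Q F j y \<partial>Q) = 0"
proof (induction k arbitrary: j rule: less_induct)
  case (less k)
  define c where "c i = (\<integral>y. F k y * gs Q F i y \<partial>Q) / (\<integral>y. (gs Q F i y)\<^sup>2 \<partial>Q)" for i
  have e: "gs Q F k = (\<lambda>x. F k x - (\<Sum>i<k. c i * gs Q F i x))"
    by (rule ext) (subst gs.simps, simp add: c_def)
  show ?case
  proof (cases "(\<integral>y. (gs Q F j y)\<^sup>2 \<partial>Q) = 0")
    case True
    then show ?thesis by (rule ip_null) simp
  next
    case False
    have orth_ij: "(\<integral>y. gs Q F i y * gs Q F j y \<partial>Q) = 0" if "i < k" "i \<noteq> j" for i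
    proof (cases "i < j")
      case True
      have "(\<integral>y. gs Q F j y * gs Q F i y \<partial>Q) = 0" by (rule less.IH) (use less.prems True in auto)
      then show ?thesis by (simp add: mult.commute)
    next
      case False
      then show ?thesis using less.IH[of i j] that by auto
    qed
    have "(\<integral>y. gs Q F k y * gs Q F j y \<partial>Q) = (\<integral>y. F k y * gs Q F j y - (\<Sum>i<k. c i * (gs Q F i y * gs Q F j y)) \<partial>Q)"
      unfolding e by (intro Bochner_Integration.integral_cong refl) (simp add: left_diff_distrib sum_distrib_right mult.assoc)
    also have "\<dots> = (\<integral>y. F k y * gs Q F j y \<partial>Q) - (\<Sum>i<k. c i * (\<integral>y. gs Q F i y * gs Q F j y \<partial>Q))"
      using Fgs_int gs_prod_int by (simp add: Bochner_Integration.integral_diff Bochner_Integration.integral_sum Bochner_Integration.integrable_sum)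
    also have "(\<Sum>i<k. c i * (\<integral>y. gs Q F i y * gs Q F j y \<partial>Q)) = (\<Sum>i\<in>{j}. c i * (\<integral>y. gs Q F i y * gs Q F j y \<partial>Q))"
      by (intro sum.mono_neutral_right) (use less.prems orth_ij in auto)
    also have "\<dots> = (\<integral>y. F k y * gs Q F j y \<partial>Q)"
      using False by (simp add: c_def power2_eq_square)
    finally show ?thesis by simp
  qed
qed


lemma gs_prodH_int:
  assumes H: "integrable Q H"
  shows "integrable Q (\<lambda>x. gs Q F i x * gs Q F j x * H x)"
proof -
  obtain B1 where B1: "\<forall>x\<in>space Q. \<bar>gs Q F i x\<bar> \<le> B1" using gs_bnd by blast
  obtain B2 where B2: "\<forall>x\<in>space Q. \<bar>gs Q F j x\<bar> \<le> B2" using gs_bnd by blast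
  have "\<bar>gs Q F i x * gs Q F j x\<bar> \<le> B1 * B2" if "x \<in> space Q" for x
    using B1 B2 that by (auto simp: abs_mult intro!: mult_mono order_trans[OF abs_ge_zero])
  then show ?thesis using bnd_mult_int[of "\<lambda>x. gs Q F i x * gs Q F j x" Q "B1 * B2" H] H by auto
qed

lemma F_repr:
  assumes "k < M"
  shows "F k x = (\<Sum>i<M. (if i = k then 1 else if i < k then (\<integral>y. F k y * gs Q F i y \<partial>Q) / (\<integral>y. (gs Q F i y)\<^sup>2 \<partial>Q) else 0) * gs Q F i x)"
proof -
  let ?c = "\<lambda>i. (\<integral>y. F k y * gs Q F i y \<partial>Q) / (\<integral>y. (gs Q F i y)\<^sup>2 \<partial>Q)"
  let ?t = "\<lambda>i. (if i = k then 1 else if i < k then ?c i else 0) * gs Q F i x"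
  have "{..<M} = {..<k} \<union> {k..<M}" using assms by auto
  then have "(\<Sum>i<M. ?t i) = (\<Sum>i\<in>{..<k} \<union> {k..<M}. ?t i)" by simp
  also have "\<dots> = (\<Sum>i<k. ?t i) + (\<Sum>i\<in>{k..<M}. ?t i)"
    by (rule sum.union_disjoint) auto
  also have "(\<Sum>i<k. ?t i) = (\<Sum>i<k. ?c i * gs Q F i x)" by (intro sum.cong) auto
  also have "(\<Sum>i\<in>{k..<M}. ?t i) = (\<Sum>i\<in>{k}. ?t i)"
    by (intro sum.mono_neutral_right) (use assms in auto)
  also have "\<dots> = gs Q F k x" by simp
  also have "gs Q F k x = F k x - (\<Sum>i<k. ?c i * gs Q F i x)" by (subst gs.simps) simp
  finally show ?thesis by simp
qed

lemma norm_equiv: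
  assumes Hm: "H \<in> borel_measurable Q" and Hnn: "\<And>x. x \<in> space Q \<Longrightarrow> 0 \<le> H x" and Hi: "integrable Q H"
  shows "\<exists>K\<ge>0. \<forall>c. (\<integral>x. (\<Sum>j<M. c j * F j x)\<^sup>2 * H x \<partial>Q) \<le> K * (\<integral>x. (\<Sum>j<M. c j * F j x)\<^sup>2 \<partial>Q)"
proof -
  define n where "n i = (\<integral>y. (gs Q F i y)\<^sup>2 \<partial>Q)" for i
  define S where "S = {i. i < M \<and> n i \<noteq> 0}"
  have nnn: "n i \<ge> 0" for i unfolding n_def by (intro integral_nonneg_AE) auto
  have npos: "n i > 0" if "i \<in> S" for i using that nnn[of i] by (auto simp: S_def)
  have finS: "finite S" by (simp add: S_def)
  define K where "K = (\<Sum>i\<in>S. (\<integral>x. (gs Q F i x)\<^sup>2 * H x \<partial>Q) / n i)"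
  have K0: "K \<ge> 0" unfolding K_def
    by (intro sum_nonneg divide_nonneg_nonneg nnn integral_nonneg_AE) (use Hnn in auto)
  have ip: "(\<integral>x. gs Q F i x * gs Q F j x \<partial>Q) = (if i = j then n i else 0)" for i j
  proof (cases "i = j")
    case True then show ?thesis by (simp add: n_def power2_eq_square)
  next
    case False
    then consider "j < i" | "i < j" by linarith
    then show ?thesis
    proof cases
      case 1 then show ?thesis using gs_orth[OF 1] False by simp
    next
      case 2 then show ?thesis using gs_orth[OF 2] False by (simp add: mult.commute)
    qed
  qed
  have "\<forall>c. (\<integral>x. (\<Sum>j<M. c j * F j x)\<^sup>2 * H x \<partial>Q) \<le> K * (\<integral>x. (\<Sum>j<M. c j * F j x)\<^sup>2 \<partial>Q)"
  proof
    fix c :: "nat \<Rightarrow> real"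
    define \<beta> where "\<beta> k i = (if i = k then 1 else if i < k then (\<integral>y. F k y * gs Q F i y \<partial>Q) / (\<integral>y. (gs Q F i y)\<^sup>2 \<partial>Q) else 0)" for k i
    define b where "b i = (\<Sum>k<M. c k * \<beta> k i)" for i
    have lin: "(\<Sum>j<M. c j * F j x) = (\<Sum>i<M. b i * gs Q F i x)" for x
    proof -
      have "(\<Sum>j<M. c j * F j x) = (\<Sum>j<M. c j * (\<Sum>i<M. \<beta> j i * gs Q F i x))"
        by (intro sum.cong refl) (simp add: F_repr \<beta>_def)
      also have "\<dots> = (\<Sum>j<M. \<Sum>i<M. c j * \<beta> j i * gs Q F i x)"
        by (simp add: sum_distrib_left mult.assoc)
      also have "\<dots> = (\<Sum>i<M. \<Sum>j<M. c j * \<beta> j i * gs Q F i x)"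
        by (rule sum.swap)
      also have "\<dots> = (\<Sum>i<M. b i * gs Q F i x)"
        by (simp add: b_def sum_distrib_right)
      finally show ?thesis .
    qed
    have sq: "(\<Sum>i<M. b i * gs Q F i x)\<^sup>2 = (\<Sum>i<M. \<Sum>j<M. b i * b j * (gs Q F i x * gs Q F j x))" for x
      by (simp add: power2_eq_square sum_product mult_ac)
    have Bc: "(\<integral>x. (\<Sum>j<M. c j * F j x)\<^sup>2 \<partial>Q) = (\<Sum>i\<in>S. (b i)\<^sup>2 * n i)"
    proof -
      have "(\<integral>x. (\<Sum>j<M. c j * F j x)\<^sup>2 \<partial>Q) = (\<Sum>i<M. \<Sum>j<M. b i * b j * (\<integral>x. gs Q F i x * gs Q F j x \<partial>Q))"
        unfolding lin sq using gs_prod_int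
        by (simp add: Bochner_Integration.integral_sum Bochner_Integration.integrable_sum)
      also have "\<dots> = (\<Sum>i<M. (b i)\<^sup>2 * n i)"
        by (simp add: ip power2_eq_square if_distrib sum.delta cong: if_cong)
      also have "\<dots> = (\<Sum>i\<in>S. (b i)\<^sup>2 * n i)"
        by (intro sum.mono_neutral_right) (auto simp: S_def)
      finally show ?thesis .
    qed
    have AEz: "AE x in Q. \<forall>i\<in>{..<M} - S. gs Q F i x = 0"
      by (rule AE_finite_allI) (auto simp: S_def n_def intro: gs_null)
    have pw: "AE x in Q. (\<Sum>j<M. c j * F j x)\<^sup>2 * H x \<le> (\<Sum>i\<in>S. (b i)\<^sup>2 * n i) * (\<Sum>i\<in>S. ((gs Q F i x)\<^sup>2 * H x) / n i)"
      using AEz AE_space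
    proof (eventually_elim)
      case (elim x)
      then have x: "x \<in> space Q" by simp
      show ?case
      proof -
      have "(\<Sum>i<M. b i * gs Q F i x) = (\<Sum>i\<in>S. b i * gs Q F i x)"
        by (intro sum.mono_neutral_right) (use elim in \<open>auto simp: S_def\<close>)
      also have "\<dots> = (\<Sum>i\<in>S. (b i * sqrt (n i)) * (gs Q F i x / sqrt (n i)))"
      proof (intro sum.cong refl)
        fix i assume "i \<in> S"
        then have "sqrt (n i) > 0" using npos by simp
        then show "b i * gs Q F i x = b i * sqrt (n i) * (gs Q F i x / sqrt (n i))" by (simp add: field_simps)
      qed
      finally have "(\<Sum>j<M. c j * F j x)\<^sup>2 \<le> (\<Sum>i\<in>S. (b i * sqrt (n i))\<^sup>2) * (\<Sum>i\<in>S. (gs Q F i x / sqrt (n i))\<^sup>2)"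
        using Cauchy_Schwarz_ineq_sum by (metis lin)
      also have "\<dots> = (\<Sum>i\<in>S. (b i)\<^sup>2 * n i) * (\<Sum>i\<in>S. (gs Q F i x)\<^sup>2 / n i)"
        using npos nnn by (simp add: power_mult_distrib power_divide)
      finally have "(\<Sum>j<M. c j * F j x)\<^sup>2 * H x \<le> (\<Sum>i\<in>S. (b i)\<^sup>2 * n i) * (\<Sum>i\<in>S. (gs Q F i x)\<^sup>2 / n i) * H x"
        by (rule mult_right_mono) (use Hnn x in auto)
      also have "\<dots> = (\<Sum>i\<in>S. (b i)\<^sup>2 * n i) * (\<Sum>i\<in>S. ((gs Q F i x)\<^sup>2 * H x) / n i)"
      proof -
        have "(\<Sum>i\<in>S. (gs Q F i x)\<^sup>2 / n i) * H x = (\<Sum>i\<in>S. ((gs Q F i x)\<^sup>2 * H x) / n i)"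
          by (simp add: sum_distrib_right)
        then show ?thesis by (simp only: mult.assoc)
      qed
      finally show ?thesis .
      qed
    qed
    have intL: "integrable Q (\<lambda>x. (\<Sum>j<M. c j * F j x)\<^sup>2 * H x)"
      unfolding lin sq sum_distrib_right
      using gs_prodH_int[OF Hi] by (auto intro!: Bochner_Integration.integrable_sum simp: mult.assoc)
    have intR: "integrable Q (\<lambda>x. (\<Sum>i\<in>S. (b i)\<^sup>2 * n i) * (\<Sum>i\<in>S. ((gs Q F i x)\<^sup>2 * H x) / n i))"
      using gs_prodH_int[OF Hi] by (auto intro!: Bochner_Integration.integrable_sum simp: power2_eq_square)
    have "(\<integral>x. (\<Sum>j<M. c j * F j x)\<^sup>2 * H x \<partial>Q) \<le> (\<integral>x. (\<Sum>i\<in>S. (b i)\<^sup>2 * n i) * (\<Sum>i\<in>S. ((gs Q F i x)\<^sup>2 * H x) / n i) \<partial>Q)"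
      by (rule integral_mono_AE[OF intL intR pw])
    also have "\<dots> = (\<Sum>i\<in>S. (b i)\<^sup>2 * n i) * K"
      unfolding K_def using gs_prodH_int[OF Hi]
      by (simp add: Bochner_Integration.integral_sum Bochner_Integration.integrable_sum power2_eq_square)
    finally show "(\<integral>x. (\<Sum>j<M. c j * F j x)\<^sup>2 * H x \<partial>Q) \<le> K * (\<integral>x. (\<Sum>j<M. c j * F j x)\<^sup>2 \<partial>Q)"
      by (simp add: Bc mult.commute)
  qed
  then show ?thesis using K0 by blast
qed

end




lemma cs_int:
  fixes u v :: "'a \<Rightarrow> real"
  assumes Q: "prob_space Q" and um: "u \<in> borel_measurable Q" and vm: "v \<in> borel_measurable Q"
    and u2: "integrable Q (\<lambda>x. (u x)\<^sup>2)" and v2: "integrable Q (\<lambda>x. (v x)\<^sup>2)" and uv: "integrable Q (\<lambda>x. u x * v x)"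
  shows "(\<integral>x. u x * v x \<partial>Q) \<le> sqrt (\<integral>x. (u x)\<^sup>2 \<partial>Q) * sqrt (\<integral>x. (v x)\<^sup>2 \<partial>Q)"
proof -
  define a where "a = sqrt (\<integral>x. (v x)\<^sup>2 \<partial>Q)"
  define b where "b = sqrt (\<integral>x. (u x)\<^sup>2 \<partial>Q)"
  have U: "(\<integral>x. (u x)\<^sup>2 \<partial>Q) \<ge> 0" by (intro integral_nonneg_AE) auto
  have V: "(\<integral>x. (v x)\<^sup>2 \<partial>Q) \<ge> 0" by (intro integral_nonneg_AE) auto
  have a2: "a\<^sup>2 = (\<integral>x. (v x)\<^sup>2 \<partial>Q)" using V by (simp add: a_def)
  have b2: "b\<^sup>2 = (\<integral>x. (u x)\<^sup>2 \<partial>Q)" using U by (simp add: b_def)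
  have a0: "a \<ge> 0" and b0: "b \<ge> 0" by (simp_all add: a_def b_def)
  have "0 \<le> (\<integral>x. (a * u x - b * v x)\<^sup>2 \<partial>Q)" by (intro integral_nonneg_AE) auto
  also have "(\<integral>x. (a * u x - b * v x)\<^sup>2 \<partial>Q) = a\<^sup>2 * (\<integral>x. (u x)\<^sup>2 \<partial>Q) - 2 * a * b * (\<integral>x. u x * v x \<partial>Q) + b\<^sup>2 * (\<integral>x. (v x)\<^sup>2 \<partial>Q)"
  proof -
    have "(\<lambda>x. (a * u x - b * v x)\<^sup>2) = (\<lambda>x. a\<^sup>2 * (u x)\<^sup>2 - (2 * a * b) * (u x * v x) + b\<^sup>2 * (v x)\<^sup>2)"
      by (auto simp: fun_eq_iff power2_eq_square algebra_simps)
    then show ?thesis using u2 v2 uv by simp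
  qed
  finally have 0: "0 \<le> a\<^sup>2 * (\<integral>x. (u x)\<^sup>2 \<partial>Q) - 2 * a * b * (\<integral>x. u x * v x \<partial>Q) + b\<^sup>2 * (\<integral>x. (v x)\<^sup>2 \<partial>Q)" .
  have e: "a\<^sup>2 * (\<integral>x. (u x)\<^sup>2 \<partial>Q) + b\<^sup>2 * (\<integral>x. (v x)\<^sup>2 \<partial>Q) = 2 * (a * b) * (a * b)"
    unfolding a2[symmetric] b2[symmetric] by (simp add: power2_eq_square)
  have *: "2 * a * b * (\<integral>x. u x * v x \<partial>Q) \<le> 2 * (a * b) * (a * b)"
    using 0 e by linarith
  show ?thesis
  proof (cases "a * b = 0")
    case False
    then have "a * b > 0" using a0 b0 by (simp add: less_le)
    then have p: "2 * (a * b) > 0" by simp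
    have "(2 * (a * b)) * (\<integral>x. u x * v x \<partial>Q) \<le> (2 * (a * b)) * (a * b)" using * by (simp add: mult.assoc)
    then have "(\<integral>x. u x * v x \<partial>Q) \<le> a * b" using p by (rule mult_left_le_imp_le)
    then show ?thesis by (simp add: a_def b_def mult.commute)
  next
    case True
    then have "(\<integral>x. (v x)\<^sup>2 \<partial>Q) = 0 \<or> (\<integral>x. (u x)\<^sup>2 \<partial>Q) = 0" using a2 b2 by auto
    then have "AE x in Q. u x * v x = 0"
    proof
      assume "(\<integral>x. (v x)\<^sup>2 \<partial>Q) = 0"
      then have "AE x in Q. (v x)\<^sup>2 = 0" using v2 integral_nonneg_eq_0_iff_AE[of Q "\<lambda>x. (v x)\<^sup>2"] by auto
      then show ?thesis by auto
    next
      assume "(\<integral>x. (u x)\<^sup>2 \<partial>Q) = 0"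
      then have "AE x in Q. (u x)\<^sup>2 = 0" using u2 integral_nonneg_eq_0_iff_AE[of Q "\<lambda>x. (u x)\<^sup>2"] by auto
      then show ?thesis by auto
    qed
    then have "(\<integral>x. u x * v x \<partial>Q) = (\<integral>x. 0 \<partial>Q)" by (intro integral_cong_AE) (use um vm in auto)
    then show ?thesis by simp
  qed
qed




context
  fixes Q :: "'a measure" and f0 :: "'a \<Rightarrow> real" and \<sigma> \<kappa> :: real
    and M :: nat and f :: "nat \<Rightarrow> 'a \<Rightarrow> real" and lstar :: "nat \<Rightarrow> real"
  assumes Q: "prob_space Q"
    and f0_meas: "f0 \<in> borel_measurable Q"
    and f0_L2: "integrable Q (\<lambda>x. (f0 x)\<^sup>2)"
    and sigma: "\<sigma> > 0"
    and f_meas: "\<And>j. j < M \<Longrightarrow> f j \<in> borel_measurable Q"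
    and A3: "\<And>j x. j < M \<Longrightarrow> x \<in> space Q \<Longrightarrow> \<bar>f j x\<bar> \<le> \<kappa>"
    and star: "lstar \<in> Lsimplex M"
begin

interpretation Q: prob_space Q by (rule Q)

lemma comb_meas[measurable]: "comb M f l \<in> borel_measurable Q"
  unfolding comb_def[abs_def] using f_meas by (intro borel_measurable_sum borel_measurable_times) auto

lemma comb_bnd: "l \<in> Lsimplex M \<Longrightarrow> x \<in> space Q \<Longrightarrow> \<bar>comb M f l x\<bar> \<le> \<kappa>"
proof -
  assume l: "l \<in> Lsimplex M" and x: "x \<in> space Q"
  have "\<bar>comb M f l x\<bar> \<le> (\<Sum>j<M. \<bar>l j * f j x\<bar>)" unfolding comb_def by (rule sum_abs)
  also have "\<dots> \<le> (\<Sum>j<M. l j * \<kappa>)"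
    using l x A3 by (intro sum_mono) (auto simp: Lsimplex_def abs_mult intro!: mult_left_mono)
  also have "\<dots> = \<kappa>" using l by (simp add: Lsimplex_def sum_distrib_right[symmetric])
  finally show ?thesis .
qed

lemma kappa_nn: "\<kappa> \<ge> 0"
proof -
  have "M \<noteq> 0"
  proof
    assume "M = 0" then show False using star by (simp add: Lsimplex_def)
  qed
  moreover obtain x where "x \<in> space Q" using Q.not_empty by blast
  ultimately show ?thesis using A3[of 0 x] by force
qed

lemma comb_diff: "(\<Sum>j<M. (l j - l' j) * f j x) = comb M f l x - comb M f l' x"
  by (simp add: comb_def left_diff_distrib sum_subtractf)

lemma comb_diff_bnd: "l \<in> Lsimplex M \<Longrightarrow> l' \<in> Lsimplex M \<Longrightarrow> x \<in> space Q \<Longrightarrow> \<bar>comb M f l x - comb M f l' x\<bar> \<le> 2 * \<kappa>"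
  using comb_bnd[of l x] comb_bnd[of l' x] by linarith

lemma dSigma_sq: "(dSigma Q M f l l')\<^sup>2 = (\<integral>x. (comb M f l x - comb M f l' x)\<^sup>2 \<partial>Q)"
proof -
  have "(\<integral>x. (comb M f l x - comb M f l' x)\<^sup>2 \<partial>Q) \<ge> 0" by (intro integral_nonneg_AE) auto
  then show ?thesis by (simp add: dSigma_def comb_diff)
qed

lemma dSigma_sym: "dSigma Q M f l l' = dSigma Q M f l' l"
proof -
  have "(\<Sum>j<M. (l j - l' j) * f j x)\<^sup>2 = (\<Sum>j<M. (l' j - l j) * f j x)\<^sup>2" for x
    by (simp add: comb_diff power2_commute)
  then show ?thesis by (simp add: dSigma_def)
qed

lemma ind_int:
  assumes N: "prob_space N" and S: "{z \<in> space N. c z} \<in> sets N"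
  shows "(\<integral>z. (if c z then 1 else 0 :: real) \<partial>N) = measure N {z \<in> space N. c z}"
    and "(\<integral>z. 1 - (if c z then 1 else 0 :: real) \<partial>N) = measure N {z \<in> space N. \<not> c z}"
proof -
  interpret N: prob_space N by (rule N)
  have "(\<integral>z. (if c z then 1 else 0 :: real) \<partial>N) = (\<integral>z. indicator {z \<in> space N. c z} z \<partial>N)"
    by (intro Bochner_Integration.integral_cong) (auto simp: indicator_def)
  also have "\<dots> = measure N {z \<in> space N. c z}" using S by (simp add: N.emeasure_eq_measure)
  finally show 1: "(\<integral>z. (if c z then 1 else 0 :: real) \<partial>N) = measure N {z \<in> space N. c z}" .
  have S': "{z \<in> space N. \<not> c z} \<in> sets N"
  proof -
    have "{z \<in> space N. \<not> c z} = space N - {z \<in> space N. c z}" by auto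
    then show ?thesis using S by auto
  qed
  have "(\<integral>z. 1 - (if c z then 1 else 0 :: real) \<partial>N) = (\<integral>z. indicator {z \<in> space N. \<not> c z} z \<partial>N)"
    by (intro Bochner_Integration.integral_cong) (auto simp: indicator_def)
  also have "\<dots> = measure N {z \<in> space N. \<not> c z}" using S' by (simp add: N.emeasure_eq_measure)
  finally show "(\<integral>z. 1 - (if c z then 1 else 0 :: real) \<partial>N) = measure N {z \<in> space N. \<not> c z}" .
qed

lemma bnd_prod_int:
  fixes u v :: "'b \<Rightarrow> real"
  assumes N: "prob_space N" and um: "u \<in> borel_measurable N" and vm: "v \<in> borel_measurable N"
    and ub: "\<And>x. x \<in> space N \<Longrightarrow> \<bar>u x\<bar> \<le> a" and vb: "\<And>x. x \<in> space N \<Longrightarrow> \<bar>v x\<bar> \<le> b"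
  shows "integrable N (\<lambda>x. u x * v x)"
proof -
  have vi: "integrable N v" by (rule bnd_int[OF N vm]) (use vb in auto)
  show ?thesis using bnd_mult_int[OF um _ vi] ub by auto
qed

lemma pfmono: "prob_space N \<Longrightarrow> B \<in> sets N \<Longrightarrow> A \<subseteq> B \<Longrightarrow> measure N A \<le> measure N B"
  by (metis prob_space.finite_measure finite_measure.finite_measure_mono)

lemma aux_lin: "(a::real) \<le> b + 1 \<Longrightarrow> c < 2 * a \<Longrightarrow> c < 2 * (b + 1)" by (simp add: algebra_simps)

lemma main:
  assumes orth: "\<And>l. l \<in> Lsimplex M \<Longrightarrow>
        (\<integral>x. (comb M f l x - comb M f lstar x) * (comb M f lstar x - f0 x) \<partial>Q) = 0"
  shows "\<exists>C>0. \<forall>n. \<forall>l2\<in>Lsimplex M. \<exists>\<phi>.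
      \<phi> \<in> borel_measurable (nfold n (Q \<Otimes>\<^sub>M lborel)) \<and>
      (\<forall>z\<in>space (nfold n (Q \<Otimes>\<^sub>M lborel)). 0 \<le> \<phi> z \<and> \<phi> z \<le> 1) \<and>
      (\<integral>z. \<phi> z \<partial>nfold n (regr_law Q f0 \<sigma>))
         \<le> exp (- C * real n * (dSigma Q M f l2 lstar)\<^sup>2) \<and>
      (\<forall>l\<in>Lsimplex M. dSigma Q M f l l2 < dSigma Q M f lstar l2 / 4 \<longrightarrow>
         (\<integral>z. 1 - \<phi> z \<partial>nfold n (regr_law Q (comb M f l) \<sigma>))
           \<le> exp (- C * real n * (dSigma Q M f l2 lstar)\<^sup>2))"
proof -
  note f0m[measurable] = f0_meas
  have k0: "\<kappa> \<ge> 0" by (rule kappa_nn)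
  define fs where "fs = comb M f lstar"
  have fsm[measurable]: "fs \<in> borel_measurable Q" unfolding fs_def by (rule comb_meas)
  define F where "F j = (if j < M then f j else (\<lambda>_. 0))" for j
  have Fm: "\<And>j. F j \<in> borel_measurable Q" using f_meas by (simp add: F_def)
  have Fb: "\<And>j x. x \<in> space Q \<Longrightarrow> \<bar>F j x\<bar> \<le> \<kappa>" using A3 k0 by (simp add: F_def)
  have f01: "integrable Q f0" using f0_L2 f0_meas Q.square_integrable_imp_integrable by blast
  have fsb: "\<And>x. x \<in> space Q \<Longrightarrow> \<bar>fs x\<bar> \<le> \<kappa>" unfolding fs_def by (rule comb_bnd[OF star])
  have fs1: "integrable Q fs" by (rule bnd_int[OF Q fsm]) (use fsb in auto)
  have dfi: "integrable Q (\<lambda>x. f0 x - fs x)" using f01 fs1 by simp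
  define H0 where "H0 x = (f0 x - fs x)\<^sup>2 + \<sigma>\<^sup>2" for x
  have H0m: "H0 \<in> borel_measurable Q" unfolding H0_def[abs_def] by measurable
  have H0i: "integrable Q H0"
  proof -
    have "integrable Q (\<lambda>x. (f0 x)\<^sup>2 - 2 * (fs x * f0 x) + (fs x)\<^sup>2 + \<sigma>\<^sup>2)"
    proof -
      have "integrable Q (\<lambda>x. fs x * f0 x)" by (rule bnd_mult_int[OF fsm _ f01]) (use fsb in auto)
      moreover have "integrable Q (\<lambda>x. fs x * fs x)" by (rule bnd_mult_int[OF fsm _ fs1]) (use fsb in auto)
      ultimately show ?thesis using f0_L2 by (simp add: power2_eq_square)
    qed
    then show ?thesis unfolding H0_def by (simp add: power2_diff algebra_simps)
  qed
  have H0nn: "\<And>x. x \<in> space Q \<Longrightarrow> 0 \<le> H0 x" by (simp add: H0_def)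
  obtain K0 where K0: "K0 \<ge> 0" and K0b: "\<And>c. (\<integral>x. (\<Sum>j<M. c j * F j x)\<^sup>2 * H0 x \<partial>Q) \<le> K0 * (\<integral>x. (\<Sum>j<M. c j * F j x)\<^sup>2 \<partial>Q)"
    using norm_equiv[where Q=Q and F=F and \<kappa>=\<kappa> and M=M and H=H0, OF Q Fm Fb H0m H0nn H0i] by blast
  define V where "V = K0 + 4 * \<kappa>\<^sup>2 + \<sigma>\<^sup>2"
  have Vpos: "V > 0" using K0 sigma by (simp add: V_def add_nonneg_pos)
  define A where "A = 256 * V / 9 + 4 * \<kappa>\<^sup>2"
  have Apos: "A > 0" using Vpos by (simp add: A_def add_pos_nonneg)
  define C where "C = 1 / (16 * A)"
  have Cpos: "C > 0" using Apos by (simp add: C_def)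
  have "\<forall>n. \<forall>l2\<in>Lsimplex M. \<exists>\<phi>.
      \<phi> \<in> borel_measurable (nfold n (Q \<Otimes>\<^sub>M lborel)) \<and>
      (\<forall>z\<in>space (nfold n (Q \<Otimes>\<^sub>M lborel)). 0 \<le> \<phi> z \<and> \<phi> z \<le> 1) \<and>
      (\<integral>z. \<phi> z \<partial>nfold n (regr_law Q f0 \<sigma>))
         \<le> exp (- C * real n * (dSigma Q M f l2 lstar)\<^sup>2) \<and>
      (\<forall>l\<in>Lsimplex M. dSigma Q M f l l2 < dSigma Q M f lstar l2 / 4 \<longrightarrow>
         (\<integral>z. 1 - \<phi> z \<partial>nfold n (regr_law Q (comb M f l) \<sigma>))
           \<le> exp (- C * real n * (dSigma Q M f l2 lstar)\<^sup>2))"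
  proof (intro allI ballI)
    fix n l2 assume l2: "l2 \<in> Lsimplex M"
    define g where "g x = comb M f l2 x - fs x" for x
    have gm[measurable]: "g \<in> borel_measurable Q" unfolding g_def[abs_def] by measurable
    have gb: "\<And>x. x \<in> space Q \<Longrightarrow> \<bar>g x\<bar> \<le> 2 * \<kappa>" unfolding g_def fs_def by (rule comb_diff_bnd[OF l2 star])
    define D where "D = (\<integral>x. (g x)\<^sup>2 \<partial>Q)"
    have DdS: "(dSigma Q M f l2 lstar)\<^sup>2 = D" by (simp add: dSigma_sq D_def g_def fs_def)
    have D0: "D \<ge> 0" unfolding D_def by (intro integral_nonneg_AE) auto
    have g2b: "\<And>x. x \<in> space Q \<Longrightarrow> \<bar>(g x)\<^sup>2\<bar> \<le> 4 * \<kappa>\<^sup>2"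
    proof -
      fix x assume x: "x \<in> space Q"
      have "\<bar>g x\<bar> \<le> \<bar>2 * \<kappa>\<bar>" using gb[OF x] k0 by simp
      then have "(g x)\<^sup>2 \<le> (2 * \<kappa>)\<^sup>2" by (simp only: abs_le_square_iff)
      then show "\<bar>(g x)\<^sup>2\<bar> \<le> 4 * \<kappa>\<^sup>2" by (simp add: power_mult_distrib)
    qed
    have g2i: "integrable Q (\<lambda>x. (g x)\<^sup>2)" by (rule bnd_int[OF Q]) (use g2b in auto)
    have D4: "D \<le> 4 * \<kappa>\<^sup>2"
    proof -
      have "D \<le> (\<integral>x. 4 * \<kappa>\<^sup>2 \<partial>Q)" unfolding D_def
        by (intro integral_mono_AE g2i) (use g2b in \<open>auto intro!: AE_I2\<close>)
      then show ?thesis by (simp add: Q.prob_space)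
    qed
    have N0: "prob_space (nfold n (regr_law Q f0 \<sigma>))"
      unfolding nfold_def by (intro prob_space_PiM regr_prob[OF Q f0_meas sigma])
    have Nl: "prob_space (nfold n (regr_law Q (comb M f l) \<sigma>))" for l
      unfolding nfold_def by (intro prob_space_PiM regr_prob[OF Q comb_meas sigma])
    define m where "m = nat \<lceil>256 * V / (9 * D)\<rceil>"
    show "\<exists>\<phi>.
      \<phi> \<in> borel_measurable (nfold n (Q \<Otimes>\<^sub>M lborel)) \<and>
      (\<forall>z\<in>space (nfold n (Q \<Otimes>\<^sub>M lborel)). 0 \<le> \<phi> z \<and> \<phi> z \<le> 1) \<and>
      (\<integral>z. \<phi> z \<partial>nfold n (regr_law Q f0 \<sigma>))
         \<le> exp (- C * real n * (dSigma Q M f l2 lstar)\<^sup>2) \<and>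
      (\<forall>l\<in>Lsimplex M. dSigma Q M f l l2 < dSigma Q M f lstar l2 / 4 \<longrightarrow>
         (\<integral>z. 1 - \<phi> z \<partial>nfold n (regr_law Q (comb M f l) \<sigma>))
           \<le> exp (- C * real n * (dSigma Q M f l2 lstar)\<^sup>2))"
    proof (cases "D > 0 \<and> 2 * m \<le> n")
      case False
      have half: "1/2 \<le> exp (- C * real n * (dSigma Q M f l2 lstar)\<^sup>2)"
      proof (cases "D = 0")
        case True
        then show ?thesis by (simp add: DdS)
      next
        case Dn: False
        then have Dp: "D > 0" using D0 by simp
        with False have nm: "n < 2 * m" by simp
        have "real m \<le> 256 * V / (9 * D) + 1"
        proof -
          have x0: "0 \<le> 256 * V / (9 * D)" using Dp Vpos by simp
          then have "real m = of_int \<lceil>256 * V / (9 * D)\<rceil>" unfolding m_def by simp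
          also have "\<dots> \<le> 256 * V / (9 * D) + 1" by (rule of_int_ceiling_le_add_one)
          finally show ?thesis .
        qed
        moreover have "real n < 2 * real m" using nm by linarith
        ultimately have "real n < 2 * (256 * V / (9 * D) + 1)"
          using aux_lin by blast
        then have "real n * D < 2 * (256 * V / (9 * D) + 1) * D"
          using Dp by (rule mult_strict_right_mono)
        also have "\<dots> = 2 * (256 * V / 9 + D)" using Dp by (simp add: field_simps)
        also have "\<dots> \<le> 2 * A" using D4 by (simp add: A_def)
        finally have "C * (real n * D) < C * (2 * A)" using Cpos by simp
        also have "C * (2 * A) = 1/8" using Apos by (simp add: C_def)
        finally have lt: "C * real n * D < 1/8" by (simp add: mult.assoc)
        have "1/2 \<le> 1 + (- C * real n * D)" using lt by linarith
        also have "\<dots> \<le> exp (- C * real n * D)" by (rule exp_ge_add_one_self)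
        finally show ?thesis by (simp add: DdS)
      qed
      show ?thesis
      proof (intro exI[of _ "\<lambda>_. 1/2"] conjI ballI impI)
        show "(\<lambda>_. 1/2) \<in> borel_measurable (nfold n (Q \<Otimes>\<^sub>M lborel))" by simp
        show "(\<integral>z. 1/2 \<partial>nfold n (regr_law Q f0 \<sigma>)) \<le> exp (- C * real n * (dSigma Q M f l2 lstar)\<^sup>2)"
          using half prob_space.prob_space[OF N0] by simp
        fix l
        show "(\<integral>z. 1 - 1/2 \<partial>nfold n (regr_law Q (comb M f l) \<sigma>)) \<le> exp (- C * real n * (dSigma Q M f l2 lstar)\<^sup>2)"
          using half prob_space.prob_space[OF Nl[of l]] by simp
      qed auto
    next
      case True
      then have Dp: "D > 0" and nm: "2 * m \<le> n" by auto
      have mge: "256 * V / (9 * D) \<le> real m" unfolding m_def by (rule real_nat_ceiling_ge)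
      have mle: "real m \<le> 256 * V / (9 * D) + 1"
      proof -
        have x0: "0 \<le> 256 * V / (9 * D)" using Dp Vpos by simp
        then have "real m = of_int \<lceil>256 * V / (9 * D)\<rceil>" unfolding m_def by simp
        also have "\<dots> \<le> 256 * V / (9 * D) + 1" by (rule of_int_ceiling_le_add_one)
        finally show ?thesis .
      qed
      have mpos: "m > 0"
      proof -
        have "0 < 256 * V / (9 * D)" using Dp Vpos by simp
        then show ?thesis using mge by linarith
      qed
      define k where "k = n div m"
      have kmn: "k * m \<le> n" unfolding k_def by (metis div_mult_mod_eq le_add1)
      define \<tau> where "\<tau> = 3 * D / 8"
      have taupos: "\<tau> > 0" using Dp by (simp add: \<tau>_def)
      have mtau: "4 * V * D \<le> real m * \<tau>\<^sup>2"
      proof -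
        have "4 * V * D = (256 * V / (9 * D)) * \<tau>\<^sup>2" using Dp by (simp add: \<tau>_def power2_eq_square field_simps)
        also have "\<dots> \<le> real m * \<tau>\<^sup>2" using mge by (intro mult_right_mono) auto
        finally show ?thesis .
      qed
      have VDpos: "V * D > 0" using Vpos Dp by simp
      have expb: "exp (- real k / 8) \<le> exp (- C * real n * (dSigma Q M f l2 lstar)\<^sup>2)"
      proof -
        have "n < (k + 1) * m" unfolding k_def using mpos
          by (metis add.commute div_mult_mod_eq mod_less_divisor mult.commute mult_Suc_right nat_add_left_cancel_less Suc_eq_plus1)
        then have r: "real n < (real k + 1) * real m" by (metis of_nat_1 of_nat_add of_nat_less_iff of_nat_mult)
        have mp: "real m > 0" using mpos by simp
        have r2: "2 * real m \<le> real n" using nm by linarith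
        have q1: "real n / real m < real k + 1" using r mp by (simp add: divide_less_eq)
        have q2: "2 \<le> real n / real m" using r2 mp by (simp add: le_divide_eq)
        have kk: "real n / (2 * real m) \<le> real k"
        proof -
          have "real n / (2 * real m) = (real n / real m) / 2" by simp
          also have "\<dots> \<le> real n / real m - 1" using q2 by simp
          finally show ?thesis using q1 by linarith
        qed
        have mD: "real m * D \<le> A"
        proof -
          have "real m * D \<le> (256 * V / (9 * D) + 1) * D" using mle Dp by (intro mult_right_mono) auto
          also have "\<dots> = 256 * V / 9 + D" using Dp by (simp add: field_simps)
          finally show ?thesis using D4 by (simp add: A_def)
        qed
        have "C * real n * D = real n * D / (16 * A)" by (simp add: C_def)
        also have "\<dots> \<le> real n * D / (16 * (real m * D))"
          using mD Dp mp Apos by (intro divide_left_mono) auto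
        also have "\<dots> = real n / (2 * real m) / 8" using Dp by (simp add: field_simps)
        also have "\<dots> \<le> real k / 8" using kk by simp
        finally have "- real k / 8 \<le> - C * real n * D" by simp
        then show ?thesis by (simp add: DdS)
      qed
      define W where "W = (\<lambda>z. g (fst z) * (snd z - fs (fst z)))"
      have Wm[measurable]: "W \<in> borel_measurable (Q \<Otimes>\<^sub>M lborel)" unfolding W_def by measurable
      define B where "B b z = (\<Sum>i\<in>{b*m..<b*m+m}. W (z i)) / real m" for b z
      define \<phi> where "\<phi> z = (if real k / 2 \<le> (\<Sum>b<k. if \<tau> < B b z then 1 else 0) then 1 else (0::real))" for z
      have blk: "i < n" if "b < k" "i \<in> {b*m..<b*m+m}" for b i
      proof -
        have "b * m + m \<le> k * m" using that(1) by (metis Suc_leI mult_Suc mult_le_mono1 add.commute)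
        then show ?thesis using that(2) kmn by auto
      qed
      have Bm: "B b \<in> borel_measurable (PiM {..<n} (\<lambda>_. P))" if "b < k" "W \<in> borel_measurable P" for b P
        unfolding B_def using that blk
        by (intro borel_measurable_divide borel_measurable_sum borel_measurable_const) (auto intro!: coord_meas[OF _ that(2)])
      have \<phi>mP: "\<phi> \<in> borel_measurable (PiM {..<n} (\<lambda>_. P))" if "W \<in> borel_measurable P" for P
        unfolding \<phi>_def using Bm[OF _ that] by measurable
      have \<phi>m: "\<phi> \<in> borel_measurable (nfold n (Q \<Otimes>\<^sub>M lborel))"
        unfolding nfold_def by (rule \<phi>mP) (rule Wm)
      have Sset: "{z \<in> space (PiM {..<n} (\<lambda>_. P)). real k / 2 \<le> (\<Sum>b<k. if \<tau> < B b z then 1 else 0)} \<in> sets (PiM {..<n} (\<lambda>_. P))"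
        if "W \<in> borel_measurable P" for P
      proof -
        have "{z \<in> space (PiM {..<n} (\<lambda>_. P)). real k / 2 \<le> (\<Sum>b<k. if \<tau> < B b z then 1 else 0)}
           = \<phi> -` {1} \<inter> space (PiM {..<n} (\<lambda>_. P))" by (auto simp: \<phi>_def split: if_splits)
        then show ?thesis using measurable_sets[OF \<phi>mP[OF that], of "{1}"] by simp
      qed
      have Tset: "{z \<in> space (PiM {..<n} (\<lambda>_. P)). real k / 2 \<le> (\<Sum>b<k. if t \<le> \<bar>B b z - \<mu>\<bar> then 1 else (0::real))} \<in> sets (PiM {..<n} (\<lambda>_. P))"
        if Wm': "W \<in> borel_measurable P" for P t \<mu>
      proof -
        have sm: "(\<lambda>z. \<Sum>b<k. if t \<le> \<bar>B b z - \<mu>\<bar> then 1 else (0::real)) \<in> borel_measurable (PiM {..<n} (\<lambda>_. P))"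
        proof (intro borel_measurable_sum)
          fix b assume "b \<in> {..<k}"
          then have [measurable]: "B b \<in> borel_measurable (PiM {..<n} (\<lambda>_. P))" using Bm[OF _ Wm'] by simp
          show "(\<lambda>z. if t \<le> \<bar>B b z - \<mu>\<bar> then 1 else (0::real)) \<in> borel_measurable (PiM {..<n} (\<lambda>_. P))"
            by measurable
        qed
        have "{z \<in> space (PiM {..<n} (\<lambda>_. P)). real k / 2 \<le> (\<Sum>b<k. if t \<le> \<bar>B b z - \<mu>\<bar> then 1 else (0::real))}
          = (\<lambda>z. \<Sum>b<k. if t \<le> \<bar>B b z - \<mu>\<bar> then 1 else (0::real)) -` {real k / 2..} \<inter> space (PiM {..<n} (\<lambda>_. P))"
          by auto
        then show ?thesis using measurable_sets[OF sm, of "{real k / 2..}"] by simp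
      qed
      have gsq_b: "\<And>x. x \<in> space Q \<Longrightarrow> \<bar>(g x)\<^sup>2\<bar> \<le> 4 * \<kappa>\<^sup>2" by (rule g2b)
      have gsum: "(\<Sum>j<M. (l2 j - lstar j) * F j x) = g x" for x
      proof -
        have "(\<Sum>j<M. (l2 j - lstar j) * F j x) = (\<Sum>j<M. (l2 j - lstar j) * f j x)"
          by (intro sum.cong refl) (simp add: F_def)
        then show ?thesis by (simp add: comb_diff g_def fs_def)
      qed
      have P0: "(\<integral>z. \<phi> z \<partial>nfold n (regr_law Q f0 \<sigma>)) \<le> exp (- real k / 8)"
      proof -
        have iP0: "integrable Q (\<lambda>x. (g x)\<^sup>2 * ((f0 x - fs x)\<^sup>2 + \<sigma>\<^sup>2))"
          using bnd_mult_int[of "\<lambda>x. (g x)\<^sup>2" Q "4 * \<kappa>\<^sup>2" H0] gsq_b H0i by (auto simp: H0_def)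
        note R0 = regr_W[OF Q f0_meas sigma gm fsm iP0, folded W_def]
        have igd: "integrable Q (\<lambda>x. g x * (f0 x - fs x))"
          by (rule bnd_mult_int[OF gm _ dfi]) (use gb in auto)
        have mu0: "(\<integral>z. W z \<partial>regr_law Q f0 \<sigma>) = 0"
        proof -
          have "(\<integral>z. W z \<partial>regr_law Q f0 \<sigma>) = (\<integral>x. g x * (f0 x - fs x) \<partial>Q)" by (rule R0(4)[OF igd])
          also have "\<dots> = (\<integral>x. - ((comb M f l2 x - comb M f lstar x) * (comb M f lstar x - f0 x)) \<partial>Q)"
            by (intro Bochner_Integration.integral_cong refl) (simp add: g_def fs_def algebra_simps)
          also have "\<dots> = 0" using orth[OF l2] by simp
          finally show ?thesis .
        qed
        have W2b: "(\<integral>z. (W z)\<^sup>2 \<partial>regr_law Q f0 \<sigma>) \<le> V * D"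
        proof -
          have "(\<integral>z. (W z)\<^sup>2 \<partial>regr_law Q f0 \<sigma>) = (\<integral>x. (g x)\<^sup>2 * H0 x \<partial>Q)"
            using regr_W(3)[OF Q f0_meas sigma gm fsm iP0] unfolding H0_def W_def by simp
          also have "\<dots> \<le> K0 * D" using K0b[of "\<lambda>j. l2 j - lstar j"] by (simp add: gsum D_def)
          also have "\<dots> \<le> V * D" using Dp by (intro mult_right_mono) (auto simp: V_def)
          finally show ?thesis .
        qed
        have v: "(\<integral>z. (W z - (\<integral>z. W z \<partial>regr_law Q f0 \<sigma>))\<^sup>2 \<partial>regr_law Q f0 \<sigma>) / (real m * \<tau>\<^sup>2) \<le> 1/4"
        proof -
          have "(\<integral>z. (W z - (\<integral>z. W z \<partial>regr_law Q f0 \<sigma>))\<^sup>2 \<partial>regr_law Q f0 \<sigma>) \<le> V * D" using W2b by (simp add: mu0)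
          moreover have mt0: "0 < real m * \<tau>\<^sup>2" using mpos taupos by simp
          ultimately have "(\<integral>z. (W z - (\<integral>z. W z \<partial>regr_law Q f0 \<sigma>))\<^sup>2 \<partial>regr_law Q f0 \<sigma>) / (real m * \<tau>\<^sup>2) \<le> V * D / (real m * \<tau>\<^sup>2)"
            by (intro divide_right_mono) auto
          also have "\<dots> \<le> V * D / (4 * V * D)"
          proof (rule divide_left_mono)
            show "4 * V * D \<le> real m * \<tau>\<^sup>2" by (rule mtau)
            show "0 \<le> V * D" using VDpos by simp
            have "0 < (real m * \<tau>\<^sup>2) * (4 * (V * D))" using mt0 VDpos by (intro mult_pos_pos) (use mpos Vpos Dp in auto)
            then show "0 < real m * \<tau>\<^sup>2 * (4 * V * D)" by (simp only: mult.assoc)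
          qed
          also have "\<dots> = 1/4" using Vpos Dp by simp
          finally show ?thesis .
        qed
        have W02: "integrable (regr_law Q f0 \<sigma>) (\<lambda>z. (W z)\<^sup>2)"
          using regr_W(2)[OF Q f0_meas sigma gm fsm iP0] unfolding W_def .
        note mm = mom[OF regr_prob[OF Q f0_meas sigma] R0(1) W02 mpos taupos kmn v]
        have "(\<integral>z. \<phi> z \<partial>nfold n (regr_law Q f0 \<sigma>)) = measure (PiM {..<n} (\<lambda>_. regr_law Q f0 \<sigma>))
            {z \<in> space (PiM {..<n} (\<lambda>_. regr_law Q f0 \<sigma>)). real k / 2 \<le> (\<Sum>b<k. if \<tau> < B b z then 1 else 0)}"
          unfolding nfold_def \<phi>_def by (rule ind_int(1)[OF N0[unfolded nfold_def] Sset[OF R0(1)]])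
        also have "\<dots> \<le> measure (PiM {..<n} (\<lambda>_. regr_law Q f0 \<sigma>)) {z \<in> space (PiM {..<n} (\<lambda>_. regr_law Q f0 \<sigma>)).
            real k / 2 \<le> (\<Sum>b<k. if \<tau> \<le> \<bar>(\<Sum>i\<in>{b*m..<b*m+m}. W (z i)) / real m - (\<integral>x. W x \<partial>regr_law Q f0 \<sigma>)\<bar> then 1 else 0)}"
        proof (rule pfmono[OF N0[unfolded nfold_def]])
          show "{z \<in> space (PiM {..<n} (\<lambda>_. regr_law Q f0 \<sigma>)).
            real k / 2 \<le> (\<Sum>b<k. if \<tau> \<le> \<bar>(\<Sum>i\<in>{b*m..<b*m+m}. W (z i)) / real m - (\<integral>x. W x \<partial>regr_law Q f0 \<sigma>)\<bar> then 1 else 0)}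
            \<in> sets (PiM {..<n} (\<lambda>_. regr_law Q f0 \<sigma>))"
            using Tset[OF R0(1)] unfolding B_def .
          show "{z \<in> space (PiM {..<n} (\<lambda>_. regr_law Q f0 \<sigma>)). real k / 2 \<le> (\<Sum>b<k. if \<tau> < B b z then 1 else 0)}
            \<subseteq> {z \<in> space (PiM {..<n} (\<lambda>_. regr_law Q f0 \<sigma>)).
            real k / 2 \<le> (\<Sum>b<k. if \<tau> \<le> \<bar>(\<Sum>i\<in>{b*m..<b*m+m}. W (z i)) / real m - (\<integral>x. W x \<partial>regr_law Q f0 \<sigma>)\<bar> then 1 else 0)}"
          proof safe
            fix z assume "real k / 2 \<le> (\<Sum>b<k. if \<tau> < B b z then 1 else (0::real))"
            also have "(\<Sum>b<k. if \<tau> < B b z then 1 else (0::real)) \<le> (\<Sum>b<k. if \<tau> \<le> \<bar>(\<Sum>i\<in>{b*m..<b*m+m}. W (z i)) / real m - (\<integral>x. W x \<partial>regr_law Q f0 \<sigma>)\<bar> then 1 else 0)"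
            proof (intro sum_mono)
              fix b assume "b \<in> {..<k}"
              have le: "B b z \<le> \<bar>(\<Sum>i\<in>{b*m..<b*m+m}. W (z i)) / real m - (\<integral>x. W x \<partial>regr_law Q f0 \<sigma>)\<bar>"
                unfolding B_def mu0 by (simp add: divide_right_mono)
              show "(if \<tau> < B b z then 1 else (0::real)) \<le> (if \<tau> \<le> \<bar>(\<Sum>i\<in>{b*m..<b*m+m}. W (z i)) / real m - (\<integral>x. W x \<partial>regr_law Q f0 \<sigma>)\<bar> then 1 else 0)"
                using le by auto
            qed
            finally show "real k / 2 \<le> (\<Sum>b<k. if \<tau> \<le> \<bar>(\<Sum>i\<in>{b*m..<b*m+m}. W (z i)) / real m - (\<integral>x. W x \<partial>regr_law Q f0 \<sigma>)\<bar> then 1 else 0)" .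
          qed
        qed
        also have "\<dots> \<le> exp (- real k / 8)" by (rule mm)
        finally show ?thesis .
      qed
      have Pl: "(\<integral>z. 1 - \<phi> z \<partial>nfold n (regr_law Q (comb M f l) \<sigma>)) \<le> exp (- real k / 8)"
        if l: "l \<in> Lsimplex M" "dSigma Q M f l l2 < dSigma Q M f lstar l2 / 4" for l
      proof -
        define hl where "hl = comb M f l"
        have hlm[measurable]: "hl \<in> borel_measurable Q" unfolding hl_def by (rule comb_meas)
        have hlb: "\<And>x. x \<in> space Q \<Longrightarrow> \<bar>hl x\<bar> \<le> \<kappa>" unfolding hl_def by (rule comb_bnd[OF l(1)])
        have dlb: "\<And>x. x \<in> space Q \<Longrightarrow> (hl x - fs x)\<^sup>2 \<le> 4 * \<kappa>\<^sup>2"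
        proof -
          fix x assume x: "x \<in> space Q"
          have "\<bar>hl x - fs x\<bar> \<le> \<bar>2 * \<kappa>\<bar>" using hlb[OF x] fsb[OF x] k0 by simp
          then have "(hl x - fs x)\<^sup>2 \<le> (2 * \<kappa>)\<^sup>2" by (simp only: abs_le_square_iff)
          then show "(hl x - fs x)\<^sup>2 \<le> 4 * \<kappa>\<^sup>2" by (simp add: power_mult_distrib)
        qed
        have Hli: "integrable Q (\<lambda>x. (hl x - fs x)\<^sup>2 + \<sigma>\<^sup>2)"
          by (rule bnd_int[OF Q, of _ "4 * \<kappa>\<^sup>2 + \<sigma>\<^sup>2"]) (use dlb in auto)
        have iPl: "integrable Q (\<lambda>x. (g x)\<^sup>2 * ((hl x - fs x)\<^sup>2 + \<sigma>\<^sup>2))"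
          using bnd_mult_int[of "\<lambda>x. (g x)\<^sup>2" Q "4 * \<kappa>\<^sup>2" "\<lambda>x. (hl x - fs x)\<^sup>2 + \<sigma>\<^sup>2"] gsq_b Hli by auto
        note R = regr_W[OF Q hlm sigma gm fsm iPl]
        have Wlm: "W \<in> borel_measurable (regr_law Q hl \<sigma>)" using R(1) unfolding W_def .
        have Wl2: "integrable (regr_law Q hl \<sigma>) (\<lambda>z. (W z)\<^sup>2)" using R(2) unfolding W_def .
        interpret Rl: prob_space "regr_law Q hl \<sigma>" by (rule regr_prob[OF Q hlm sigma])
        have Wl1: "integrable (regr_law Q hl \<sigma>) W" using Wl2 Wlm Rl.square_integrable_imp_integrable by blast
        have W2b: "(\<integral>z. (W z)\<^sup>2 \<partial>regr_law Q hl \<sigma>) \<le> V * D"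
        proof -
          have "(\<integral>z. (W z)\<^sup>2 \<partial>regr_law Q hl \<sigma>) = (\<integral>x. (g x)\<^sup>2 * ((hl x - fs x)\<^sup>2 + \<sigma>\<^sup>2) \<partial>Q)"
            using R(3) unfolding W_def by simp
          also have "\<dots> \<le> (\<integral>x. (g x)\<^sup>2 * (4 * \<kappa>\<^sup>2 + \<sigma>\<^sup>2) \<partial>Q)"
            by (intro integral_mono_AE iPl) (use g2i dlb in \<open>auto intro!: AE_I2 mult_left_mono\<close>)
          also have "\<dots> = (4 * \<kappa>\<^sup>2 + \<sigma>\<^sup>2) * D" by (simp add: D_def mult.commute)
          also have "\<dots> \<le> V * D" using Dp K0 by (intro mult_right_mono) (auto simp: V_def)
          finally show ?thesis .
        qed
        define \<mu> where "\<mu> = (\<integral>z. W z \<partial>regr_law Q hl \<sigma>)"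
        have mul: "\<mu> \<ge> 3 * D / 4"
        proof -
          have igl: "integrable Q (\<lambda>x. g x * (hl x - fs x))"
          proof (rule bnd_prod_int[OF Q gm _ gb, of _ "2 * \<kappa>"])
            fix x assume x: "x \<in> space Q"
            show "\<bar>hl x - fs x\<bar> \<le> 2 * \<kappa>" using hlb[OF x] fsb[OF x] by linarith
          qed simp
          have "\<mu> = (\<integral>x. g x * (hl x - fs x) \<partial>Q)" unfolding \<mu>_def using R(4)[OF igl] unfolding W_def .
          also have "\<dots> = (\<integral>x. (g x)\<^sup>2 - g x * (comb M f l2 x - hl x) \<partial>Q)"
            by (intro Bochner_Integration.integral_cong refl) (simp add: g_def power2_eq_square algebra_simps)
          also have "\<dots> = D - (\<integral>x. g x * (comb M f l2 x - hl x) \<partial>Q)"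
          proof -
            have "integrable Q (\<lambda>x. g x * (comb M f l2 x - hl x))"
              by (rule bnd_prod_int[OF Q gm _ gb, of _ "2 * \<kappa>"]) (use comb_diff_bnd[OF l2 l(1)] in \<open>auto simp: hl_def\<close>)
            then show ?thesis using g2i by (simp add: D_def)
          qed
          finally have mu_eq: "\<mu> = D - (\<integral>x. g x * (comb M f l2 x - hl x) \<partial>Q)" .
          have cs: "(\<integral>x. g x * (comb M f l2 x - hl x) \<partial>Q) \<le> sqrt D * sqrt (\<integral>x. (comb M f l2 x - hl x)\<^sup>2 \<partial>Q)"
            unfolding D_def
          proof (rule cs_int[OF Q gm])
            show "(\<lambda>x. comb M f l2 x - hl x) \<in> borel_measurable Q" by measurable
            show "integrable Q (\<lambda>x. (g x)\<^sup>2)" by (rule g2i)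
            show "integrable Q (\<lambda>x. (comb M f l2 x - hl x)\<^sup>2)"
              unfolding power2_eq_square hl_def
              by (rule bnd_prod_int[OF Q _ _ comb_diff_bnd[OF l2 l(1)] comb_diff_bnd[OF l2 l(1)]]) auto
            show "integrable Q (\<lambda>x. g x * (comb M f l2 x - hl x))"
              by (rule bnd_prod_int[OF Q gm _ gb, of _ "2 * \<kappa>"]) (use comb_diff_bnd[OF l2 l(1)] in \<open>auto simp: hl_def\<close>)
          qed
          have "sqrt (\<integral>x. (comb M f l2 x - hl x)\<^sup>2 \<partial>Q) = dSigma Q M f l2 l"
            by (simp add: dSigma_def comb_diff hl_def)
          also have "\<dots> = dSigma Q M f l l2" by (rule dSigma_sym)
          also have "\<dots> < dSigma Q M f lstar l2 / 4" by (rule l(2))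
          also have "dSigma Q M f lstar l2 = sqrt D"
          proof -
            have "dSigma Q M f lstar l2 = dSigma Q M f l2 lstar" by (rule dSigma_sym)
            also have "\<dots> = sqrt D" by (simp add: dSigma_def comb_diff D_def g_def fs_def)
            finally show ?thesis .
          qed
          finally have "sqrt D * sqrt (\<integral>x. (comb M f l2 x - hl x)\<^sup>2 \<partial>Q) \<le> sqrt D * (sqrt D / 4)"
            using D0 by (intro mult_left_mono) auto
          also have "\<dots> = D / 4" using D0 by simp
          finally show ?thesis using mu_eq cs by linarith
        qed
        define t where "t = \<mu> - \<tau>"
        have tt: "t \<ge> \<tau>" using mul by (simp add: t_def \<tau>_def)
        have tpos: "t > 0" using tt taupos by simp
        have v: "(\<integral>z. (W z - (\<integral>z. W z \<partial>regr_law Q hl \<sigma>))\<^sup>2 \<partial>regr_law Q hl \<sigma>) / (real m * t\<^sup>2) \<le> 1/4"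
        proof -
          have ve: "(\<integral>z. (W z - (\<integral>z. W z \<partial>regr_law Q hl \<sigma>))\<^sup>2 \<partial>regr_law Q hl \<sigma>) = (\<integral>z. (W z)\<^sup>2 \<partial>regr_law Q hl \<sigma>) - (\<integral>z. W z \<partial>regr_law Q hl \<sigma>)\<^sup>2"
            using Rl.variance_eq[OF Wl1 Wl2] by simp
          have vb: "(\<integral>z. (W z - (\<integral>z. W z \<partial>regr_law Q hl \<sigma>))\<^sup>2 \<partial>regr_law Q hl \<sigma>) \<le> V * D"
            unfolding ve using W2b zero_le_power2[of "\<integral>z. W z \<partial>regr_law Q hl \<sigma>"] by linarith
          have mt0: "0 < real m * \<tau>\<^sup>2" using mpos taupos by simp
          have "real m * \<tau>\<^sup>2 \<le> real m * t\<^sup>2" using tt taupos by (intro mult_left_mono power_mono) auto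
          then have mt: "4 * V * D \<le> real m * t\<^sup>2" using mtau by linarith
          have mt0': "0 < real m * t\<^sup>2" using mt0 mt VDpos by linarith
          have "(\<integral>z. (W z - (\<integral>z. W z \<partial>regr_law Q hl \<sigma>))\<^sup>2 \<partial>regr_law Q hl \<sigma>) / (real m * t\<^sup>2) \<le> V * D / (real m * t\<^sup>2)"
            using vb mt0' by (intro divide_right_mono) auto
          also have "\<dots> \<le> V * D / (4 * V * D)"
          proof (rule divide_left_mono)
            show "4 * V * D \<le> real m * t\<^sup>2" by (rule mt)
            show "0 \<le> V * D" using VDpos by simp
            have "0 < (real m * t\<^sup>2) * (4 * (V * D))" using mt0' VDpos by (intro mult_pos_pos) (use mpos Vpos Dp in auto)
            then show "0 < real m * t\<^sup>2 * (4 * V * D)" by (simp only: mult.assoc)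
          qed
          also have "\<dots> = 1/4" using Vpos Dp by simp
          finally show ?thesis .
        qed
        note mm = mom[OF regr_prob[OF Q hlm sigma] Wlm Wl2 mpos tpos kmn v]
        have Nl': "prob_space (PiM {..<n} (\<lambda>_. regr_law Q hl \<sigma>))" using Nl[of l] by (simp add: nfold_def hl_def)
        have "(\<integral>z. 1 - \<phi> z \<partial>nfold n (regr_law Q (comb M f l) \<sigma>)) = measure (PiM {..<n} (\<lambda>_. regr_law Q hl \<sigma>))
            {z \<in> space (PiM {..<n} (\<lambda>_. regr_law Q hl \<sigma>)). \<not> real k / 2 \<le> (\<Sum>b<k. if \<tau> < B b z then 1 else 0)}"
          unfolding nfold_def \<phi>_def hl_def[symmetric] by (rule ind_int(2)[OF Nl' Sset[OF Wlm]])
        also have "\<dots> \<le> measure (PiM {..<n} (\<lambda>_. regr_law Q hl \<sigma>)) {z \<in> space (PiM {..<n} (\<lambda>_. regr_law Q hl \<sigma>)).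
            real k / 2 \<le> (\<Sum>b<k. if t \<le> \<bar>(\<Sum>i\<in>{b*m..<b*m+m}. W (z i)) / real m - (\<integral>x. W x \<partial>regr_law Q hl \<sigma>)\<bar> then 1 else 0)}"
        proof (rule pfmono[OF Nl'])
          show "{z \<in> space (PiM {..<n} (\<lambda>_. regr_law Q hl \<sigma>)).
            real k / 2 \<le> (\<Sum>b<k. if t \<le> \<bar>(\<Sum>i\<in>{b*m..<b*m+m}. W (z i)) / real m - (\<integral>x. W x \<partial>regr_law Q hl \<sigma>)\<bar> then 1 else 0)}
            \<in> sets (PiM {..<n} (\<lambda>_. regr_law Q hl \<sigma>))"
            using Tset[OF Wlm] unfolding B_def .
          show "{z \<in> space (PiM {..<n} (\<lambda>_. regr_law Q hl \<sigma>)). \<not> real k / 2 \<le> (\<Sum>b<k. if \<tau> < B b z then 1 else 0)}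
            \<subseteq> {z \<in> space (PiM {..<n} (\<lambda>_. regr_law Q hl \<sigma>)).
            real k / 2 \<le> (\<Sum>b<k. if t \<le> \<bar>(\<Sum>i\<in>{b*m..<b*m+m}. W (z i)) / real m - (\<integral>x. W x \<partial>regr_law Q hl \<sigma>)\<bar> then 1 else 0)}"
          proof safe
            fix z assume lt: "\<not> real k / 2 \<le> (\<Sum>b<k. if \<tau> < B b z then 1 else (0::real))"
            have tot: "(\<Sum>b<k. if \<tau> < B b z then 1 else (0::real)) + (\<Sum>b<k. if \<tau> < B b z then 0 else (1::real)) = real k"
              by (simp add: sum.distrib[symmetric] if_distrib cong: if_cong)
            have "real k / 2 \<le> (\<Sum>b<k. if \<tau> < B b z then 0 else (1::real))" using lt tot by linarith
            also have "\<dots> \<le> (\<Sum>b<k. if t \<le> \<bar>(\<Sum>i\<in>{b*m..<b*m+m}. W (z i)) / real m - (\<integral>x. W x \<partial>regr_law Q hl \<sigma>)\<bar> then 1 else 0)"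
            proof (intro sum_mono)
              fix b assume "b \<in> {..<k}"
              have "\<not> \<tau> < B b z \<Longrightarrow> t \<le> \<bar>(\<Sum>i\<in>{b*m..<b*m+m}. W (z i)) / real m - (\<integral>x. W x \<partial>regr_law Q hl \<sigma>)\<bar>"
                unfolding B_def t_def \<mu>_def by linarith
              then show "(if \<tau> < B b z then 0 else (1::real)) \<le> (if t \<le> \<bar>(\<Sum>i\<in>{b*m..<b*m+m}. W (z i)) / real m - (\<integral>x. W x \<partial>regr_law Q hl \<sigma>)\<bar> then 1 else 0)"
                by auto
            qed
            finally show "real k / 2 \<le> (\<Sum>b<k. if t \<le> \<bar>(\<Sum>i\<in>{b*m..<b*m+m}. W (z i)) / real m - (\<integral>x. W x \<partial>regr_law Q hl \<sigma>)\<bar> then 1 else 0)" .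
          qed
        qed
        also have "\<dots> \<le> exp (- real k / 8)" by (rule mm)
        finally show ?thesis .
      qed
      show ?thesis
      proof (intro exI[of _ \<phi>] conjI ballI impI)
        show "\<phi> \<in> borel_measurable (nfold n (Q \<Otimes>\<^sub>M lborel))" by (rule \<phi>m)
        show "(\<integral>z. \<phi> z \<partial>nfold n (regr_law Q f0 \<sigma>)) \<le> exp (- C * real n * (dSigma Q M f l2 lstar)\<^sup>2)"
          using P0 expb by linarith
        fix l assume ll: "l \<in> Lsimplex M" "dSigma Q M f l l2 < dSigma Q M f lstar l2 / 4"
        from Pl[OF ll] expb show "(\<integral>z. 1 - \<phi> z \<partial>nfold n (regr_law Q (comb M f l) \<sigma>)) \<le> exp (- C * real n * (dSigma Q M f l2 lstar)\<^sup>2)"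
          by linarith
      qed (auto simp: \<phi>_def)
    qed
  qed
  then show ?thesis using Cpos by blast
qed

end


theorem lemma4:
  fixes Q :: "'a measure" and f0 :: "'a \<Rightarrow> real" and \<sigma> \<kappa> :: real
    and M :: nat and f :: "nat \<Rightarrow> 'a \<Rightarrow> real" and lstar :: "nat \<Rightarrow> real"
  assumes Q: "prob_space Q"
    and f0_meas: "f0 \<in> borel_measurable Q"
    and f0_L2: "integrable Q (\<lambda>x. (f0 x)\<^sup>2)"
    and sigma: "\<sigma> > 0"
    and f_meas: "\<And>j. j < M \<Longrightarrow> f j \<in> borel_measurable Q"
    and A3: "\<And>j x. j < M \<Longrightarrow> x \<in> space Q \<Longrightarrow> \<bar>f j x\<bar> \<le> \<kappa>"
    and star: "lstar \<in> Lsimplex M"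
    and orth: "\<And>l. l \<in> Lsimplex M \<Longrightarrow>
        (\<integral>x. (comb M f l x - comb M f lstar x) * (comb M f lstar x - f0 x) \<partial>Q) = 0"
  shows "\<exists>C>0. \<forall>n. \<forall>l2\<in>Lsimplex M. \<exists>\<phi>.
      \<phi> \<in> borel_measurable (nfold n (Q \<Otimes>\<^sub>M lborel)) \<and>
      (\<forall>z\<in>space (nfold n (Q \<Otimes>\<^sub>M lborel)). 0 \<le> \<phi> z \<and> \<phi> z \<le> 1) \<and>
      (\<integral>z. \<phi> z \<partial>nfold n (regr_law Q f0 \<sigma>))
         \<le> exp (- C * real n * (dSigma Q M f l2 lstar)\<^sup>2) \<and>
      (\<forall>l\<in>Lsimplex M. dSigma Q M f l l2 < dSigma Q M f lstar l2 / 4 \<longrightarrow>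
         (\<integral>z. 1 - \<phi> z \<partial>nfold n (regr_law Q (comb M f l) \<sigma>))
           \<le> exp (- C * real n * (dSigma Q M f l2 lstar)\<^sup>2))"
    using main[OF Q f0_meas f0_L2 sigma f_meas A3 star orth] .

end
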